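(* Let $\mathcal{C}=[0,1]^3\subset\mathbb{R}^3$ be the unit cube with faces labelled $1,\dots,6$ so that the pairs of opposite (parallel) faces are $\{1,2\}$, $\{3,4\}$, $\{5,6\}$, and let $T=\{e_1+e_2,\,e_3+e_4,\,e_5+e_6\}\subset\mathbb{F}_2^6$. Let $\lambda$ be a proper colouring of $\mathcal{C}$ with values in $\mathbb{F}_2^k$, $k\ge3$, such that $M_\lambda=\mathbb{R}^3/\ker\lambda$ is orientable, and let $\Lambda$ be its defining matrix. Then: (i) if $\mathrm{Row}(\Lambda)\cap T=T$, then $M_\lambda$ is homeomorphic to the $3$-torus; (ii) if $\emptyset\ne\mathrm{Row}(\Lambda)\cap T\subsetneq T$, then $M_\lambda$ is homeomorphic to the half-turn manifold $\mathfrak{F}_2$; (iii) if $\mathrm{Row}(\Lambda)\cap T=\emptyset$, then $M_\lambda$ is homeomorphic to the Hantzsche--Wendt manifold.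
   Context: A colouring of $\mathcal{C}$ is a map $\lambda$ from the set of faces $\{1,\dots,6\}$ to $\mathbb{F}_2^k$ whose image spans $\mathbb{F}_2^k$; it is proper if at each vertex of the cube the colours of the three faces containing it are linearly independent. It induces a homomorphism $\lambda$ from the right-angled Coxeter group generated by the reflections of $\mathbb{R}^3$ in the faces of $\mathcal{C}$ to $\mathbb{F}_2^k$, sending the reflection in face $i$ to $\lambda(i)$. The defining matrix $\Lambda$ is the $k\times6$ matrix over $\mathbb{F}_2$ whose $i$-th column is $\lambda(i)$; $\mathrm{Row}(\Lambda)\subset\mathbb{F}_2^6$ is its row space; $e_i$ is the $i$-th standard basis vector of $\mathbb{F}_2^6$. $\mathfrak{F}_2$ denotes the closed orientable flat $3$-manifold given as the mapping torus of the rotation by $\pi$ (the map $-\mathrm{id}$) of the flat $2$-torus (described in the paper as the unique orientable Euclidean circle bundle over the Klein bottle). The Hantzsche--Wendt manifold is the closed orientable flat $3$-manifold with vanishing first rational Betti number. *)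

theory Defs
  imports "HOL-Analysis.Analysis" "HOL-Library.Z2"
begin

datatype face = F1 | F2 | F3 | F4 | F5 | F6

lemma UNIV_face: "(UNIV :: face set) = {F1, F2, F3, F4, F5, F6}"
  using face.exhaust by auto

instance face :: finite
  by standard (simp add: UNIV_face)

fun face_axis :: "face \<Rightarrow> 3" where
  "face_axis F1 = 1" | "face_axis F2 = 1"
| "face_axis F3 = 2" | "face_axis F4 = 2"
| "face_axis F5 = 3" | "face_axis F6 = 3"

fun face_level :: "face \<Rightarrow> real" where
  "face_level F1 = 0" | "face_level F2 = 1"
| "face_level F3 = 0" | "face_level F4 = 1"
| "face_level F5 = 0" | "face_level F6 = 1"

definition face_reflection :: "face \<Rightarrow> real^3 \<Rightarrow> real^3" where
  "face_reflection i x =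
     (\<chi> j. if j = face_axis i then 2 * face_level i - x $ j else x $ j)"

definition word_eval :: "face list \<Rightarrow> real^3 \<Rightarrow> real^3" where
  "word_eval w = foldr (\<lambda>i f. face_reflection i \<circ> f) w id"

definition coxeter_group :: "(real^3 \<Rightarrow> real^3) set" where
  "coxeter_group = {word_eval w | w. True}"

definition colouring :: "(face \<Rightarrow> bit^'k) \<Rightarrow> bool" where
  "colouring lam \<longleftrightarrow> vec.span (range lam) = UNIV"

text \<open>Proper: at each vertex (one face from each opposite pair) the three
  colours are linearly independent (as a family, i.e. distinct and independent).\<close>
definition proper_colouring :: "(face \<Rightarrow> bit^'k) \<Rightarrow> bool" where
  "proper_colouring lam \<longleftrightarrow> colouring lam \<and>
     (\<forall>a\<in>{F1,F2}. \<forall>b\<in>{F3,F4}. \<forall>c\<in>{F5,F6}.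
        card {lam a, lam b, lam c} = 3 \<and> vec.independent {lam a, lam b, lam c})"

text \<open>Kernel of the induced homomorphism W \<rightarrow> F_2^k (reflection in face i \<mapsto> lam i).\<close>
definition colouring_kernel :: "(face \<Rightarrow> bit^'k) \<Rightarrow> (real^3 \<Rightarrow> real^3) set" where
  "colouring_kernel lam = {word_eval w | w. sum_list (map lam w) = 0}"

definition defining_row :: "(face \<Rightarrow> bit^'k) \<Rightarrow> 'k \<Rightarrow> bit^face" where
  "defining_row lam m = (\<chi> i. lam i $ m)"

definition row_space :: "(face \<Rightarrow> bit^'k) \<Rightarrow> (bit^face) set" where
  "row_space lam = vec.span (range (defining_row lam))"

definition T_set :: "(bit^face) set" where
  "T_set = {axis F1 1 + axis F2 1, axis F3 1 + axis F4 1, axis F5 1 + axis F6 1}"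

definition orbit_rel :: "('a \<Rightarrow> 'a) set \<Rightarrow> ('a \<times> 'a) set" where
  "orbit_rel G = {(x, y). \<exists>g\<in>G. g x = y}"

definition orbit_space_open :: "('a::topological_space \<Rightarrow> 'a) set \<Rightarrow> 'a set set \<Rightarrow> bool" where
  "orbit_space_open G U \<longleftrightarrow> U \<subseteq> UNIV // orbit_rel G \<and>
      open {x. orbit_rel G `` {x} \<in> U}"

lemma istopology_orbit_space_open: "istopology (orbit_space_open G)"
proof -
  have U: "{x. orbit_rel G `` {x} \<in> \<Union>K} = (\<Union>S\<in>K. {x. orbit_rel G `` {x} \<in> S})"
    for K :: "'a set set set" by auto
  have I: "{x. orbit_rel G `` {x} \<in> S \<inter> T} = {x. orbit_rel G `` {x} \<in> S} \<inter> {x. orbit_rel G `` {x} \<in> T}"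
    for S T :: "'a set set" by auto
  show ?thesis
    unfolding istopology_def orbit_space_open_def U I
    by (auto intro!: open_Int open_UN)
qed

definition orbit_space :: "('a::topological_space \<Rightarrow> 'a) set \<Rightarrow> 'a set topology" where
  "orbit_space G = topology (orbit_space_open G)"

definition M_lam :: "(face \<Rightarrow> bit^'k) \<Rightarrow> (real^3) set topology" where
  "M_lam lam = orbit_space (colouring_kernel lam)"

text \<open>Orientability of R^3/ker lam: every deck transformation preserves orientation.\<close>
definition orientable_colouring :: "(face \<Rightarrow> bit^'k) \<Rightarrow> bool" where
  "orientable_colouring lam \<longleftrightarrow>
     (\<forall>g\<in>colouring_kernel lam. det (matrix (\<lambda>x. g x - g 0)) > 0)"

inductive_set gen_group :: "('a \<Rightarrow> 'a) set \<Rightarrow> ('a \<Rightarrow> 'a) set" for S where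
  gen_id: "id \<in> gen_group S"
| gen_mult: "g \<in> S \<Longrightarrow> h \<in> gen_group S \<Longrightarrow> g \<circ> h \<in> gen_group S"
| gen_inv: "g \<in> S \<Longrightarrow> h \<in> gen_group S \<Longrightarrow> inv g \<circ> h \<in> gen_group S"

definition vec3 :: "real \<Rightarrow> real \<Rightarrow> real \<Rightarrow> real^3" where
  "vec3 a b c = vector [a, b, c]"

definition torus3 :: "(real^3) set topology" where
  "torus3 = orbit_space (gen_group
     {(\<lambda>x. x + vec3 1 0 0), (\<lambda>x. x + vec3 0 1 0), (\<lambda>x. x + vec3 0 0 1)})"

text \<open>Half-turn manifold: mapping torus of -id on R^2/Z^2.\<close>
definition half_turn_manifold :: "(real^3) set topology" where
  "half_turn_manifold = orbit_space (gen_group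
     {(\<lambda>x. x + vec3 1 0 0), (\<lambda>x. x + vec3 0 1 0),
      (\<lambda>x. vec3 (- x$1) (- x$2) (x$3 + 1))})"

definition hantzsche_wendt :: "(real^3) set topology" where
  "hantzsche_wendt = orbit_space (gen_group
     {(\<lambda>x. vec3 (x$1 + 1/2) (- x$2 + 1/2) (- x$3)),
      (\<lambda>x. vec3 (- x$1) (x$2 + 1/2) (- x$3 + 1/2)),
      (\<lambda>x. vec3 (- x$1 + 1/2) (- x$2) (x$3 + 1/2))})"

end

theory Submission
  imports Defs
begin



lemma openin_orbit_space: "openin (orbit_space G) U \<longleftrightarrow> orbit_space_open G U"
  unfolding orbit_space_def using istopology_orbit_space_open topology_inverse' by metis

lemma topspace_orbit_space: "topspace (orbit_space G) = UNIV // orbit_rel G"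
proof -
  have "{x. orbit_rel G `` {x} \<in> UNIV // orbit_rel G} = UNIV"
    by (auto simp: quotient_def)
  then have "orbit_space_open G (UNIV // orbit_rel G)"
    unfolding orbit_space_open_def by simp
  then have "openin (orbit_space G) (UNIV // orbit_rel G)"
    by (simp add: openin_orbit_space)
  moreover have "\<And>U. openin (orbit_space G) U \<Longrightarrow> U \<subseteq> UNIV // orbit_rel G"
    by (simp add: openin_orbit_space orbit_space_open_def)
  ultimately show ?thesis
    apply (intro subset_antisym)
     apply (auto simp: topspace_def)[1]
    using openin_subset by blast
qed

lemma orbit_img:
  assumes hg: "\<And>x. h (g x) = x" and gh: "\<And>y. g (h y) = y"
    and rel: "\<And>x x'. (g x, g x') \<in> orbit_rel K \<longleftrightarrow> (x, x') \<in> orbit_rel M"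
  shows "orbit_rel K `` {g x} = g ` (orbit_rel M `` {x})"
proof
  show "orbit_rel K `` {g x} \<subseteq> g ` (orbit_rel M `` {x})"
  proof
    fix y assume "y \<in> orbit_rel K `` {g x}"
    then have "(g x, g (h y)) \<in> orbit_rel K" using gh by simp
    then have "(x, h y) \<in> orbit_rel M" using rel by blast
    then show "y \<in> g ` (orbit_rel M `` {x})" using gh by (metis ImageI image_eqI singletonI)
  qed
  show "g ` (orbit_rel M `` {x}) \<subseteq> orbit_rel K `` {g x}"
    using rel by auto
qed

lemma cont_img:
  fixes g :: "'a::topological_space \<Rightarrow> 'b::topological_space"
  assumes cg: "continuous_on UNIV g" and hg: "\<And>x. h (g x) = x" and gh: "\<And>y. g (h y) = y"
    and rel: "\<And>x x'. (g x, g x') \<in> orbit_rel K \<longleftrightarrow> (x, x') \<in> orbit_rel M"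
  shows "continuous_map (orbit_space M) (orbit_space K) (image g)"
  unfolding continuous_map_def
proof (intro conjI allI impI)
  have im: "orbit_rel K `` {g x} = g ` (orbit_rel M `` {x})" for x
    by (rule orbit_img[OF hg gh rel])
  show "image g \<in> topspace (orbit_space M) \<rightarrow> topspace (orbit_space K)"
    unfolding topspace_orbit_space
  proof
    fix C assume "C \<in> UNIV // orbit_rel M"
    then obtain x where "C = orbit_rel M `` {x}" by (auto simp: quotient_def)
    then have "g ` C = orbit_rel K `` {g x}" using im by simp
    then show "g ` C \<in> UNIV // orbit_rel K" by (auto simp: quotient_def)
  qed
  fix U assume "openin (orbit_space K) U"
  then have U: "U \<subseteq> UNIV // orbit_rel K" "open {y. orbit_rel K `` {y} \<in> U}"
    unfolding openin_orbit_space orbit_space_open_def by auto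
  have eq: "{x. orbit_rel M `` {x} \<in> {C \<in> topspace (orbit_space M). g ` C \<in> U}}
      = g -` {y. orbit_rel K `` {y} \<in> U}"
    unfolding topspace_orbit_space by (auto simp: im quotient_def)
  have cgv: "\<forall>B. open B \<longrightarrow> open (g -` B)"
    using cg unfolding continuous_on_open_vimage[OF open_UNIV] by simp
  have "open (g -` {y. orbit_rel K `` {y} \<in> U})"
    by (rule cgv[rule_format, OF U(2)])
  then show "openin (orbit_space M) {C \<in> topspace (orbit_space M). g ` C \<in> U}"
    unfolding openin_orbit_space orbit_space_open_def eq
    by (simp add: topspace_orbit_space)
qed

lemma orbit_space_homeo:
  fixes g :: "'a::topological_space \<Rightarrow> 'b::topological_space"
  assumes cg: "continuous_on UNIV g" and ch: "continuous_on UNIV h"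
    and hg: "\<And>x. h (g x) = x" and gh: "\<And>y. g (h y) = y"
    and rel: "\<And>x x'. (g x, g x') \<in> orbit_rel K \<longleftrightarrow> (x, x') \<in> orbit_rel M"
  shows "orbit_space K homeomorphic_space orbit_space M"
proof -
  have rel': "(h y, h y') \<in> orbit_rel M \<longleftrightarrow> (y, y') \<in> orbit_rel K" for y y'
    using rel[of "h y" "h y'"] gh by simp
  have c1: "continuous_map (orbit_space M) (orbit_space K) (image g)"
    by (rule cont_img[OF cg hg gh rel])
  have c2: "continuous_map (orbit_space K) (orbit_space M) (image h)"
    by (rule cont_img[OF ch gh hg rel'])
  have "homeomorphic_maps (orbit_space M) (orbit_space K) (image g) (image h)"
  proof -
    have i1: "h ` (g ` C) = C" for C
      unfolding image_image hg by simp
    have i2: "g ` (h ` C) = C" for C 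
      unfolding image_image gh by simp
    show ?thesis
      unfolding homeomorphic_maps_def
      by (intro conjI c1 c2 ballI i1 i2)
  qed
  then have "orbit_space M homeomorphic_space orbit_space K"
    unfolding homeomorphic_space_def by (intro exI)
  then show ?thesis using homeomorphic_space_sym by metis
qed




definition sg :: "bool \<Rightarrow> real" where "sg b = (if b then -1 else 1)"

definition gaff :: "bool \<Rightarrow> bool \<Rightarrow> bool \<Rightarrow> real \<Rightarrow> real \<Rightarrow> real \<Rightarrow> real^3 \<Rightarrow> real^3" where
  "gaff e1 e2 e3 t1 t2 t3 x = vec3 (sg e1 * x$1 + t1) (sg e2 * x$2 + t2) (sg e3 * x$3 + t3)"

lemma vec3_nth [simp]: "vec3 a b c $ 1 = a" "vec3 a b c $ 2 = b" "vec3 a b c $ 3 = c"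
  by (simp_all add: vec3_def)

lemma vec3_eq_iff: "(x::'a::zero^3) = y \<longleftrightarrow> x$1 = y$1 \<and> x$2 = y$2 \<and> x$3 = y$3"
  by (simp add: vec_eq_iff forall_3)

lemma vec3_inj [simp]: "vec3 a b c = vec3 a' b' c' \<longleftrightarrow> a = a' \<and> b = b' \<and> c = c'"
  by (simp add: vec3_eq_iff)

lemma sg_simps [simp]: "sg True = -1" "sg False = 1" "sg (\<not> b) = - sg b" "sg b * sg b = 1"
  "sg b \<noteq> 0"
  by (auto simp: sg_def)

lemma sg_xor: "sg (a \<noteq> b) = sg a * sg b"
  by (auto simp: sg_def)

lemma gaff_comp:
  "gaff e1 e2 e3 t1 t2 t3 \<circ> gaff f1 f2 f3 s1 s2 s3 =
   gaff (e1 \<noteq> f1) (e2 \<noteq> f2) (e3 \<noteq> f3) (sg e1 * s1 + t1) (sg e2 * s2 + t2) (sg e3 * s3 + t3)"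
  by (auto simp: fun_eq_iff gaff_def sg_def algebra_simps)

lemma gaff_comp_app:
  "gaff e1 e2 e3 t1 t2 t3 (gaff f1 f2 f3 s1 s2 s3 x) =
   gaff (e1 \<noteq> f1) (e2 \<noteq> f2) (e3 \<noteq> f3) (sg e1 * s1 + t1) (sg e2 * s2 + t2) (sg e3 * s3 + t3) x"
  using gaff_comp[of e1 e2 e3 t1 t2 t3 f1 f2 f3 s1 s2 s3] by (simp add: fun_eq_iff)

lemma gaff_id: "gaff False False False 0 0 0 = id"
  by (simp add: fun_eq_iff gaff_def vec3_eq_iff)

lemma gaff_inv:
  "inv (gaff e1 e2 e3 t1 t2 t3) = gaff e1 e2 e3 (- sg e1 * t1) (- sg e2 * t2) (- sg e3 * t3)"
  by (rule inv_unique_comp) (simp_all add: gaff_comp gaff_id[symmetric] algebra_simps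
       flip: mult.assoc)

lemma gaff_eq_iff:
  "gaff e1 e2 e3 t1 t2 t3 = gaff f1 f2 f3 s1 s2 s3 \<longleftrightarrow>
    e1 = f1 \<and> e2 = f2 \<and> e3 = f3 \<and> t1 = s1 \<and> t2 = s2 \<and> t3 = s3"
proof
  assume h: "gaff e1 e2 e3 t1 t2 t3 = gaff f1 f2 f3 s1 s2 s3"
  from fun_cong[OF h, of 0] have t: "t1 = s1" "t2 = s2" "t3 = s3"
    by (simp_all add: gaff_def)
  from fun_cong[OF h, of "vec3 1 1 1"] t have "sg e1 = sg f1" "sg e2 = sg f2" "sg e3 = sg f3"
    by (simp_all add: gaff_def)
  then show "e1 = f1 \<and> e2 = f2 \<and> e3 = f3 \<and> t1 = s1 \<and> t2 = s2 \<and> t3 = s3"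
    using t by (auto simp: sg_def split: if_splits)
qed simp

lemma gen_group_subset:
  assumes "id \<in> E" "\<And>g h. g \<in> S \<Longrightarrow> h \<in> E \<Longrightarrow> g \<circ> h \<in> E"
    "\<And>g h. g \<in> S \<Longrightarrow> h \<in> E \<Longrightarrow> inv g \<circ> h \<in> E"
  shows "gen_group S \<subseteq> E"
proof
  fix x assume "x \<in> gen_group S" then show "x \<in> E"
  proof induct
    case gen_id then show ?case using assms(1) .
  next
    case (gen_mult g h) then show ?case using assms(2) by blast
  next
    case (gen_inv g h) then show ?case using assms(3) by blast
  qed
qed

lemma gen_group_pow:
  assumes "\<And>h. h \<in> G \<Longrightarrow> gaff False False False v1 v2 v3 \<circ> h \<in> G"
    "\<And>h. h \<in> G \<Longrightarrow> gaff False False False (-v1) (-v2) (-v3) \<circ> h \<in> G"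
    "h \<in> G"
  shows "gaff False False False (of_int n * v1) (of_int n * v2) (of_int n * v3) \<circ> h \<in> G"
proof (induction n rule: int_induct[where k=0])
  case base then show ?case using assms(3) by (simp add: gaff_id)
next
  case (step1 i)
  have "gaff False False False (of_int (i+1) * v1) (of_int (i+1) * v2) (of_int (i+1) * v3) \<circ> h
    = gaff False False False v1 v2 v3 \<circ> (gaff False False False (of_int i * v1) (of_int i * v2) (of_int i * v3) \<circ> h)"
    by (simp add: o_assoc gaff_comp algebra_simps)
  then show ?case by (metis assms(1) step1(2))
next
  case (step2 i)
  have "gaff False False False (of_int (i-1) * v1) (of_int (i-1) * v2) (of_int (i-1) * v3) \<circ> h
    = gaff False False False (-v1) (-v2) (-v3) \<circ> (gaff False False False (of_int i * v1) (of_int i * v2) (of_int i * v3) \<circ> h)"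
    by (simp add: o_assoc gaff_comp algebra_simps)
  then show ?case by (metis assms(2) step2(2))
qed

lemma gen_group_closed:
  assumes "g \<in> S" "h \<in> gen_group S"
  shows "g \<circ> h \<in> gen_group S" "inv g \<circ> h \<in> gen_group S"
  using assms by (auto intro: gen_group.intros)




lemma trans_closed:
  assumes "\<And>h. h \<in> G \<Longrightarrow> gaff False False False 1 0 0 \<circ> h \<in> G"
    "\<And>h. h \<in> G \<Longrightarrow> gaff False False False (-1) 0 0 \<circ> h \<in> G"
    "\<And>h. h \<in> G \<Longrightarrow> gaff False False False 0 1 0 \<circ> h \<in> G"
    "\<And>h. h \<in> G \<Longrightarrow> gaff False False False 0 (-1) 0 \<circ> h \<in> G"
    "\<And>h. h \<in> G \<Longrightarrow> gaff False False False 0 0 1 \<circ> h \<in> G"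
    "\<And>h. h \<in> G \<Longrightarrow> gaff False False False 0 0 (-1) \<circ> h \<in> G"
    "h \<in> G"
  shows "gaff False False False (of_int a) (of_int b) (of_int c) \<circ> h \<in> G"
proof -
  have c3: "gaff False False False (of_int c * 0) (of_int c * 0) (of_int c * 1) \<circ> h \<in> G"
    by (rule gen_group_pow) (use assms in simp_all)
  have c2: "gaff False False False (of_int b * 0) (of_int b * 1) (of_int b * 0) \<circ>
     (gaff False False False (of_int c * 0) (of_int c * 0) (of_int c * 1) \<circ> h) \<in> G"
    by (rule gen_group_pow[OF _ _ c3]) (use assms in simp_all)
  have c1: "gaff False False False (of_int a * 1) (of_int a * 0) (of_int a * 0) \<circ>
     (gaff False False False (of_int b * 0) (of_int b * 1) (of_int b * 0) \<circ>
     (gaff False False False (of_int c * 0) (of_int c * 0) (of_int c * 1) \<circ> h)) \<in> G"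
    by (rule gen_group_pow[OF _ _ c2]) (use assms in simp_all)
  have "gaff False False False (of_int a * 1) (of_int a * 0) (of_int a * 0) \<circ>
     (gaff False False False (of_int b * 0) (of_int b * 1) (of_int b * 0) \<circ>
     (gaff False False False (of_int c * 0) (of_int c * 0) (of_int c * 1) \<circ> h)) =
     gaff False False False (of_int a) (of_int b) (of_int c) \<circ> h"
    by (simp add: o_assoc gaff_comp)
  then show ?thesis using c1 by simp
qed

subsection \<open>Torus\<close>

definition ET :: "(real^3 \<Rightarrow> real^3) set" where
  "ET = {gaff False False False (of_int a) (of_int b) (of_int c) | a b c. True}"

lemma torus_gens:
  "{(\<lambda>x. x + vec3 1 0 0), (\<lambda>x. x + vec3 0 1 0), (\<lambda>x. x + vec3 0 0 1)} =
   {gaff False False False 1 0 0, gaff False False False 0 1 0, gaff False False False 0 0 1}"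
  by (auto simp: fun_eq_iff gaff_def vec3_eq_iff)

lemma ET_mem: "gaff False False False (of_int a) (of_int b) (of_int c) \<in> ET"
  unfolding ET_def by blast

lemma torus_group: "gen_group {gaff False False False 1 0 0, gaff False False False 0 1 0,
   gaff False False False 0 0 1} = ET" (is "gen_group ?S = _")
proof
  show "gen_group ?S \<subseteq> ET"
  proof (rule gen_group_subset)
    show "id \<in> ET" using ET_mem[of 0 0 0] by (simp add: gaff_id)
    fix g h assume g: "g \<in> ?S" and h: "h \<in> ET"
    from h obtain a b c where hh: "h = gaff False False False (of_int a) (of_int b) (of_int c)"
      unfolding ET_def by blast
    from g have "g = gaff False False False 1 0 0 \<or> g = gaff False False False 0 1 0 \<or>
       g = gaff False False False 0 0 1" by simp
    then show "g \<circ> h \<in> ET" "inv g \<circ> h \<in> ET"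
      unfolding hh 
      using ET_mem[of "a+1" b c] ET_mem[of a "b+1" c] ET_mem[of a b "c+1"]
        ET_mem[of "a-1" b c] ET_mem[of a "b-1" c] ET_mem[of a b "c-1"]
      by (auto simp: gaff_comp gaff_inv add.commute)
  qed
  show "ET \<subseteq> gen_group ?S"
  proof
    fix f assume "f \<in> ET"
    then obtain a b c where ff: "f = gaff False False False (of_int a) (of_int b) (of_int c)"
      unfolding ET_def by blast
    have m: "h \<in> gen_group ?S \<Longrightarrow> g \<in> ?S \<Longrightarrow> g \<circ> h \<in> gen_group ?S" for g h
      by (rule gen_group_closed(1))
    have i: "h \<in> gen_group ?S \<Longrightarrow> g \<in> ?S \<Longrightarrow> inv g \<circ> h \<in> gen_group ?S" for g h
      by (rule gen_group_closed(2))
    have "gaff False False False (of_int a) (of_int b) (of_int c) \<circ> id \<in> gen_group ?S"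
    proof (rule trans_closed)
      show "id \<in> gen_group ?S" by (rule gen_id)
    next
      fix h assume h: "h \<in> gen_group ?S"
      show "gaff False False False 1 0 0 \<circ> h \<in> gen_group ?S" by (rule m[OF h]) simp
      show "gaff False False False 0 1 0 \<circ> h \<in> gen_group ?S" by (rule m[OF h]) simp
      show "gaff False False False 0 0 1 \<circ> h \<in> gen_group ?S" by (rule m[OF h]) simp
      show "gaff False False False (-1) 0 0 \<circ> h \<in> gen_group ?S"
        using i[OF h, of "gaff False False False 1 0 0"] by (simp add: gaff_inv)
      show "gaff False False False 0 (-1) 0 \<circ> h \<in> gen_group ?S"
        using i[OF h, of "gaff False False False 0 1 0"] by (simp add: gaff_inv)
      show "gaff False False False 0 0 (-1) \<circ> h \<in> gen_group ?S"
        using i[OF h, of "gaff False False False 0 0 1"] by (simp add: gaff_inv)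
    qed
    then show "f \<in> gen_group ?S" using ff by simp
  qed
qed

lemma torus3_eq: "torus3 = orbit_space ET"
  unfolding torus3_def torus_gens torus_group ..

lemma orbit_rel_ET: "(x, y) \<in> orbit_rel ET \<longleftrightarrow>
  (\<exists>a b c. y = gaff False False False (of_int a) (of_int b) (of_int c) x)"
  unfolding orbit_rel_def ET_def by auto




subsection \<open>Half-turn\<close>

definition EH :: "(real^3 \<Rightarrow> real^3) set" where
  "EH = {gaff (odd c) (odd c) False (of_int a) (of_int b) (of_int c) | a b c. True}"

lemma EH_mem: "gaff (odd c) (odd c) False (of_int a) (of_int b) (of_int c) \<in> EH"
  unfolding EH_def by blast

lemma half_gens:
  "{(\<lambda>x. x + vec3 1 0 0), (\<lambda>x. x + vec3 0 1 0), (\<lambda>x. vec3 (- x$1) (- x$2) (x$3 + 1))} =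
   {gaff False False False 1 0 0, gaff False False False 0 1 0, gaff True True False 0 0 1}"
  by (auto simp: fun_eq_iff gaff_def vec3_eq_iff)

lemma half_group: "gen_group {gaff False False False 1 0 0, gaff False False False 0 1 0,
   gaff True True False 0 0 1} = EH" (is "gen_group ?S = _")
proof
  show "gen_group ?S \<subseteq> EH"
  proof (rule gen_group_subset)
    show "id \<in> EH" using EH_mem[of 0 0 0] by (simp add: gaff_id)
    fix g h assume g: "g \<in> ?S" and h: "h \<in> EH"
    from h obtain a b c where hh: "h = gaff (odd c) (odd c) False (of_int a) (of_int b) (of_int c)"
      unfolding EH_def by blast
    from g have "g = gaff False False False 1 0 0 \<or> g = gaff False False False 0 1 0 \<or>
       g = gaff True True False 0 0 1" by simp
    then show "g \<circ> h \<in> EH" "inv g \<circ> h \<in> EH"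
      unfolding hh 
      using EH_mem[of c "a+1" b] EH_mem[of c a "b+1"] EH_mem[of "c+1" "-a" "-b"]
        EH_mem[of c "a-1" b] EH_mem[of c a "b-1"] EH_mem[of "c-1" "-a" "-b"]
      by (auto simp: gaff_comp gaff_inv add.commute)
  qed
  show "EH \<subseteq> gen_group ?S"
  proof
    fix f assume "f \<in> EH"
    then obtain a b c where ff: "f = gaff (odd c) (odd c) False (of_int a) (of_int b) (of_int c)"
      unfolding EH_def by blast
    let ?G = "gen_group ?S"
    have m: "h \<in> ?G \<Longrightarrow> g \<in> ?S \<Longrightarrow> g \<circ> h \<in> ?G" for g h
      by (rule gen_group_closed(1))
    have i: "h \<in> ?G \<Longrightarrow> g \<in> ?S \<Longrightarrow> inv g \<circ> h \<in> ?G" for g h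
      by (rule gen_group_closed(2))
    have s2: "gaff False False False 0 0 2 \<circ> h \<in> ?G" if h: "h \<in> ?G" for h
    proof -
      have "gaff True True False 0 0 1 \<circ> (gaff True True False 0 0 1 \<circ> h) \<in> ?G"
        by (rule m[OF m[OF h]]) simp_all
      then show ?thesis by (simp add: o_assoc gaff_comp)
    qed
    have s2': "gaff False False False 0 0 (-2) \<circ> h \<in> ?G" if h: "h \<in> ?G" for h
    proof -
      have "inv (gaff True True False 0 0 1) \<circ> (inv (gaff True True False 0 0 1) \<circ> h) \<in> ?G"
        by (rule i[OF i[OF h]]) simp_all
      then show ?thesis by (simp add: o_assoc gaff_comp gaff_inv)
    qed
    obtain j r where c: "c = 2 * j + r" and r: "r = 0 \<or> r = 1"
      by (metis odd_two_times_div_two_succ even_two_times_div_two add_0_right)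
    have base: "gaff False False False (of_int j * 0) (of_int j * 0) (of_int j * 2) \<circ> id \<in> ?G"
      by (rule gen_group_pow) (use s2 s2' gen_id in simp_all)
    have base2: "gaff (odd c) (odd c) False 0 0 (of_int c) \<in> ?G"
    proof (cases "r = 0")
      case True
      then show ?thesis using base c by (simp add: mult.commute)
    next
      case False
      then have r1: "r = 1" using r by simp
      have "gaff True True False 0 0 1 \<circ> (gaff False False False (of_int j * 0) (of_int j * 0) (of_int j * 2) \<circ> id) \<in> ?G"
        by (rule m[OF base]) simp
      then show ?thesis using c r1 by (simp add: gaff_comp mult.commute add.commute)
    qed
    have step_b: "gaff False False False (of_int b * 0) (of_int b * 1) (of_int b * 0) \<circ> gaff (odd c) (odd c) False 0 0 (of_int c) \<in> ?G"
    proof (rule gen_group_pow[OF _ _ base2])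
      fix h assume h: "h \<in> ?G"
      show "gaff False False False 0 1 0 \<circ> h \<in> ?G" by (rule m[OF h]) simp
      show "gaff False False False (- 0) (- 1) (- 0) \<circ> h \<in> ?G"
        using i[OF h, of "gaff False False False 0 1 0"] by (simp add: gaff_inv)
    qed
    have step_a: "gaff False False False (of_int a * 1) (of_int a * 0) (of_int a * 0) \<circ>
       (gaff False False False (of_int b * 0) (of_int b * 1) (of_int b * 0) \<circ> gaff (odd c) (odd c) False 0 0 (of_int c)) \<in> ?G"
    proof (rule gen_group_pow[OF _ _ step_b])
      fix h assume h: "h \<in> ?G"
      show "gaff False False False 1 0 0 \<circ> h \<in> ?G" by (rule m[OF h]) simp
      show "gaff False False False (- 1) (- 0) (- 0) \<circ> h \<in> ?G"
        using i[OF h, of "gaff False False False 1 0 0"] by (simp add: gaff_inv)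
    qed
    then show "f \<in> ?G" using ff by (simp add: gaff_comp o_assoc)
  qed
qed

lemma half_eq: "half_turn_manifold = orbit_space EH"
  unfolding half_turn_manifold_def half_gens half_group ..

lemma orbit_rel_EH: "(x, y) \<in> orbit_rel EH \<longleftrightarrow>
  (\<exists>a b c. y = gaff (odd c) (odd c) False (of_int a) (of_int b) (of_int c) x)"
  unfolding orbit_rel_def EH_def by auto




subsection \<open>Hantzsche-Wendt\<close>

definition hwc :: "bool \<Rightarrow> bool \<Rightarrow> bool \<Rightarrow> int \<Rightarrow> int \<Rightarrow> int \<Rightarrow> bool" where
  "hwc e1 e2 e3 T1 T2 T3 \<longleftrightarrow> (e3 = (e1 \<noteq> e2)) \<and> (odd T1 = e2) \<and> (odd T2 = e3) \<and> (odd T3 = e1)"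

definition EW :: "(real^3 \<Rightarrow> real^3) set" where
  "EW = {gaff e1 e2 e3 (of_int T1 / 2) (of_int T2 / 2) (of_int T3 / 2) | e1 e2 e3 T1 T2 T3.
     hwc e1 e2 e3 T1 T2 T3}"

lemma EW_mem: "hwc e1 e2 e3 T1 T2 T3 \<Longrightarrow> gaff e1 e2 e3 (of_int T1 / 2) (of_int T2 / 2) (of_int T3 / 2) \<in> EW"
  unfolding EW_def by blast

lemma sg_half: "sg f * (of_int T / 2) + of_int F / 2 = of_int ((if f then - T else T) + F) / (2::real)"
  by (auto simp: sg_def)

lemma odd_if: "odd ((if f then - T else T) + F) \<longleftrightarrow> (odd T \<noteq> odd (F::int))"
  by auto

lemma EW_comp:
  assumes "hwc f1 f2 f3 D1 D2 D3" "hwc e1 e2 e3 T1 T2 T3"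
  shows "gaff f1 f2 f3 (of_int D1 / 2) (of_int D2 / 2) (of_int D3 / 2) \<circ>
         gaff e1 e2 e3 (of_int T1 / 2) (of_int T2 / 2) (of_int T3 / 2) \<in> EW"
  unfolding gaff_comp sg_half
  by (rule EW_mem) (use assms in \<open>auto simp: hwc_def odd_if\<close>)

lemma hw_gens:
  "{(\<lambda>x. vec3 (x$1 + 1/2) (- x$2 + 1/2) (- x$3)),
    (\<lambda>x. vec3 (- x$1) (x$2 + 1/2) (- x$3 + 1/2)),
    (\<lambda>x. vec3 (- x$1 + 1/2) (- x$2) (x$3 + 1/2))} =
   {gaff False True True (1/2) (1/2) 0, gaff True False True 0 (1/2) (1/2),
    gaff True True False (1/2) 0 (1/2)}"
  by (auto simp: fun_eq_iff gaff_def vec3_eq_iff)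

lemma hw_group: "gen_group {gaff False True True (1/2) (1/2) 0, gaff True False True 0 (1/2) (1/2),
    gaff True True False (1/2) 0 (1/2)} = EW" (is "gen_group ?S = _")
proof
  show "gen_group ?S \<subseteq> EW"
  proof (rule gen_group_subset)
    show "id \<in> EW" using EW_mem[of False False False 0 0 0] by (simp add: gaff_id hwc_def)
    fix g h assume g: "g \<in> ?S" and h: "h \<in> EW"
    from h obtain e1 e2 e3 T1 T2 T3 where hh: "h = gaff e1 e2 e3 (of_int T1 / 2) (of_int T2 / 2) (of_int T3 / 2)"
      and hc: "hwc e1 e2 e3 T1 T2 T3"
      unfolding EW_def by blast
    have a: "gaff False True True (1/2) (1/2) 0 = gaff False True True (of_int 1 / 2) (of_int 1 / 2) (of_int 0 / 2)"
      "inv (gaff False True True (1/2) (1/2) 0) = gaff False True True (of_int (-1) / 2) (of_int 1 / 2) (of_int 0 / 2)"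
      by (simp_all add: gaff_inv)
    have b: "gaff True False True 0 (1/2) (1/2) = gaff True False True (of_int 0 / 2) (of_int 1 / 2) (of_int 1 / 2)"
      "inv (gaff True False True 0 (1/2) (1/2)) = gaff True False True (of_int 0 / 2) (of_int (-1) / 2) (of_int 1 / 2)"
      by (simp_all add: gaff_inv)
    have c: "gaff True True False (1/2) 0 (1/2) = gaff True True False (of_int 1 / 2) (of_int 0 / 2) (of_int 1 / 2)"
      "inv (gaff True True False (1/2) 0 (1/2)) = gaff True True False (of_int 1 / 2) (of_int 0 / 2) (of_int (-1) / 2)"
      by (simp_all add: gaff_inv)
    from g have "g = gaff False True True (1/2) (1/2) 0 \<or> g = gaff True False True 0 (1/2) (1/2) \<or>
       g = gaff True True False (1/2) 0 (1/2)" by simp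
    then have gd: "g = gaff False True True (1/2) (1/2) 0 \<or> g = gaff True False True 0 (1/2) (1/2) \<or>
       g = gaff True True False (1/2) 0 (1/2)" .
    have ha: "hwc False True True 1 1 0" "hwc False True True (-1) 1 0"
      "hwc True False True 0 1 1" "hwc True False True 0 (-1) 1"
      "hwc True True False 1 0 1" "hwc True True False 1 0 (-1)" by (simp_all add: hwc_def)
    show "g \<circ> h \<in> EW"
      using gd
    proof (elim disjE)
      assume "g = gaff False True True (1/2) (1/2) 0" then show ?thesis
        unfolding a(1) using EW_comp[OF ha(1) hc] by (simp add: hh)
    next
      assume "g = gaff True False True 0 (1/2) (1/2)" then show ?thesis
        unfolding b(1) using EW_comp[OF ha(3) hc] by (simp add: hh)
    next
      assume "g = gaff True True False (1/2) 0 (1/2)" then show ?thesis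
        unfolding c(1) using EW_comp[OF ha(5) hc] by (simp add: hh)
    qed
    show "inv g \<circ> h \<in> EW"
      using gd
    proof (elim disjE)
      assume "g = gaff False True True (1/2) (1/2) 0" then show ?thesis
        unfolding a(2) using EW_comp[OF ha(2) hc] by (simp add: hh gaff_inv)
    next
      assume "g = gaff True False True 0 (1/2) (1/2)" then show ?thesis
        unfolding b(2) using EW_comp[OF ha(4) hc] by (simp add: hh gaff_inv)
    next
      assume "g = gaff True True False (1/2) 0 (1/2)" then show ?thesis
        unfolding c(2) using EW_comp[OF ha(6) hc] by (simp add: hh gaff_inv)
    qed
  qed
  show "EW \<subseteq> gen_group ?S"
  proof
    fix f assume "f \<in> EW"
    then obtain e1 e2 e3 T1 T2 T3 where ff: "f = gaff e1 e2 e3 (of_int T1 / 2) (of_int T2 / 2) (of_int T3 / 2)"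
      and hc: "hwc e1 e2 e3 T1 T2 T3"
      unfolding EW_def by blast
    let ?G = "gen_group ?S"
    have m: "h \<in> ?G \<Longrightarrow> g \<in> ?S \<Longrightarrow> g \<circ> h \<in> ?G" for g h
      by (rule gen_group_closed(1))
    have i: "h \<in> ?G \<Longrightarrow> g \<in> ?S \<Longrightarrow> inv g \<circ> h \<in> ?G" for g h
      by (rule gen_group_closed(2))
    have sq: "g \<circ> (g \<circ> h) \<in> ?G" "inv g \<circ> (inv g \<circ> h) \<in> ?G" if "h \<in> ?G" "g \<in> ?S" for g h
      using m[OF m[OF that(1) that(2)] that(2)] i[OF i[OF that(1) that(2)] that(2)] by auto
    have tr: "gaff False False False (of_int a) (of_int b) (of_int c) \<circ> h \<in> ?G"
      if h: "h \<in> ?G" for a b c h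
    proof (rule trans_closed[OF _ _ _ _ _ _ h])
      fix h assume h: "h \<in> ?G"
      show "gaff False False False 1 0 0 \<circ> h \<in> ?G"
        using sq(1)[OF h, of "gaff False True True (1/2) (1/2) 0"] by (simp add: o_assoc gaff_comp)
      show "gaff False False False (-1) 0 0 \<circ> h \<in> ?G"
        using sq(2)[OF h, of "gaff False True True (1/2) (1/2) 0"] by (simp add: o_assoc gaff_comp gaff_inv)
      show "gaff False False False 0 1 0 \<circ> h \<in> ?G"
        using sq(1)[OF h, of "gaff True False True 0 (1/2) (1/2)"] by (simp add: o_assoc gaff_comp)
      show "gaff False False False 0 (-1) 0 \<circ> h \<in> ?G"
        using sq(2)[OF h, of "gaff True False True 0 (1/2) (1/2)"] by (simp add: o_assoc gaff_comp gaff_inv)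
      show "gaff False False False 0 0 1 \<circ> h \<in> ?G"
        using sq(1)[OF h, of "gaff True True False (1/2) 0 (1/2)"] by (simp add: o_assoc gaff_comp)
      show "gaff False False False 0 0 (-1) \<circ> h \<in> ?G"
        using sq(2)[OF h, of "gaff True True False (1/2) 0 (1/2)"] by (simp add: o_assoc gaff_comp gaff_inv)
    qed
    have gA: "gaff False True True (1/2) (1/2) 0 \<in> ?G"
      using m[OF gen_id, of "gaff False True True (1/2) (1/2) 0"] by simp
    have gB: "gaff True False True 0 (1/2) (1/2) \<in> ?G"
      using m[OF gen_id, of "gaff True False True 0 (1/2) (1/2)"] by simp
    have gC: "gaff True True False (1/2) 0 (1/2) \<in> ?G"
      using m[OF gen_id, of "gaff True True False (1/2) 0 (1/2)"] by simp
    have ev: "\<exists>n. T = 2 * n + (if odd T then 1 else 0)" for T :: int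
      by (metis odd_two_times_div_two_succ even_two_times_div_two add_0_right)
    obtain n1 where n1: "T1 = 2 * n1 + (if odd T1 then 1 else 0)" using ev by blast
    obtain n2 where n2: "T2 = 2 * n2 + (if odd T2 then 1 else 0)" using ev by blast
    obtain n3 where n3: "T3 = 2 * n3 + (if odd T3 then 1 else 0)" using ev by blast
    have "e3 = (e1 \<noteq> e2)" "odd T1 = e2" "odd T2 = e3" "odd T3 = e1" using hc by (auto simp: hwc_def)
    then consider "\<not> e1" "\<not> e2" "\<not> e3" "even T1" "even T2" "even T3"
      | "\<not> e1" "e2" "e3" "odd T1" "odd T2" "even T3"
      | "e1" "\<not> e2" "e3" "even T1" "odd T2" "odd T3"
      | "e1" "e2" "\<not> e3" "odd T1" "even T2" "odd T3"
      by (cases e1; cases e2) auto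
    then show "f \<in> ?G"
    proof cases
      case 1
      then have "T1 = 2 * n1" "T2 = 2 * n2" "T3 = 2 * n3" using n1 n2 n3 by (metis add_0_right)+
      then show ?thesis using tr[OF gen_id, of n1 n2 n3] ff 1 by simp
    next
      case 2
      then have "T1 = 2 * n1 + 1" "T2 = 2 * n2 + 1" "T3 = 2 * n3" using n1 n2 n3 by (metis add_0_right)+
      then show ?thesis using tr[OF gA, of n1 n2 n3] ff 2
        by (simp add: gaff_comp add_divide_distrib add.commute)
    next
      case 3
      then have "T1 = 2 * n1" "T2 = 2 * n2 + 1" "T3 = 2 * n3 + 1" using n1 n2 n3 by (metis add_0_right)+
      then show ?thesis using tr[OF gB, of n1 n2 n3] ff 3
        by (simp add: gaff_comp add_divide_distrib add.commute)
    next
      case 4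
      then have "T1 = 2 * n1 + 1" "T2 = 2 * n2" "T3 = 2 * n3 + 1" using n1 n2 n3 by (metis add_0_right)+
      then show ?thesis using tr[OF gC, of n1 n2 n3] ff 4
        by (simp add: gaff_comp add_divide_distrib add.commute)
    qed
  qed
qed

lemma hw_eq: "hantzsche_wendt = orbit_space EW"
  unfolding hantzsche_wendt_def hw_gens hw_group ..

lemma orbit_rel_EW: "(x, y) \<in> orbit_rel EW \<longleftrightarrow>
  (\<exists>e1 e2 e3 T1 T2 T3. hwc e1 e2 e3 T1 T2 T3 \<and>
     y = gaff e1 e2 e3 (of_int T1 / 2) (of_int T2 / 2) (of_int T3 / 2) x)"
  unfolding orbit_rel_def EW_def by blast




lemma bit_self_add [simp]: "(x::bit) + x = 0"
  by (metis bit_2_eq_0 mult_2 mult_zero_left)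

lemma vec_self_add [simp]: "(v::bit^'k) + v = 0"
  by (simp add: vec_eq_iff del: add_bit_eq_xor)

lemma of_nat_bit: "(of_nat n :: bit) = of_bool (odd n)"
  by (induction n) (auto simp del: add_bit_eq_xor)

lemma word_eval_Nil: "word_eval [] = id"
  by (simp add: word_eval_def)

lemma word_eval_Cons: "word_eval (i # w) = face_reflection i \<circ> word_eval w"
  by (simp add: word_eval_def)

lemma three_neq [simp]: "(1::3) \<noteq> 2" "(1::3) \<noteq> 3" "(2::3) \<noteq> 3" "(2::3) \<noteq> 1" "(3::3) \<noteq> 1" "(3::3) \<noteq> 2"
  by simp_all

lemma fr_gaff:
  "face_reflection F1 = gaff True False False 0 0 0"
  "face_reflection F2 = gaff True False False 2 0 0"
  "face_reflection F3 = gaff False True False 0 0 0"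
  "face_reflection F4 = gaff False True False 0 2 0"
  "face_reflection F5 = gaff False False True 0 0 0"
  "face_reflection F6 = gaff False False True 0 0 2"
  by (auto simp: fun_eq_iff face_reflection_def gaff_def vec3_eq_iff)

lemma sum_list_count:
  fixes lam :: "face \<Rightarrow> bit^'k"
  shows "sum_list (map lam w) = (\<Sum>i\<in>UNIV. of_nat (count_list w i) *s lam i)"
proof (induction w)
  case Nil then show ?case by simp
next
  case (Cons x w)
  have "(\<Sum>i\<in>UNIV. of_nat (count_list (x # w) i) *s lam i) =
        (\<Sum>i\<in>UNIV. (if x = i then lam i else 0) + of_nat (count_list w i) *s lam i)"
    by (rule sum.cong) (auto simp: vector_sadd_rdistrib simp del: add_bit_eq_xor)
  also have "\<dots> = lam x + (\<Sum>i\<in>UNIV. of_nat (count_list w i) *s lam i)"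
    by (simp add: sum.distrib)
  finally show ?case using Cons by simp
qed

lemma word_gaff:
  "\<exists>m1 m2 m3. word_eval w = gaff (odd (count_list w F1 + count_list w F2))
      (odd (count_list w F3 + count_list w F4)) (odd (count_list w F5 + count_list w F6))
      (2 * of_int m1) (2 * of_int m2) (2 * of_int m3) \<and>
     (odd m1 \<longleftrightarrow> odd (count_list w F2)) \<and> (odd m2 \<longleftrightarrow> odd (count_list w F4)) \<and>
     (odd m3 \<longleftrightarrow> odd (count_list w F6))"
proof (induction w)
  case Nil then show ?case
    by (intro exI[of _ 0]) (simp add: word_eval_Nil gaff_id)
next
  case (Cons x w)
  then obtain m1 m2 m3 where h: "word_eval w = gaff (odd (count_list w F1 + count_list w F2))
      (odd (count_list w F3 + count_list w F4)) (odd (count_list w F5 + count_list w F6))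
      (2 * of_int m1) (2 * of_int m2) (2 * of_int m3)"
     "(odd m1 \<longleftrightarrow> odd (count_list w F2))" "(odd m2 \<longleftrightarrow> odd (count_list w F4))"
     "(odd m3 \<longleftrightarrow> odd (count_list w F6))" by blast
  show ?case
  proof (cases x)
    case F1 then show ?thesis using h
      by (intro exI[of _ "-m1"] exI[of _ m2] exI[of _ m3]) (simp add: word_eval_Cons fr_gaff gaff_comp)
  next
    case F2 then show ?thesis using h
      by (intro exI[of _ "1-m1"] exI[of _ m2] exI[of _ m3]) (simp add: word_eval_Cons fr_gaff gaff_comp algebra_simps)
  next
    case F3 then show ?thesis using h
      by (intro exI[of _ m1] exI[of _ "-m2"] exI[of _ m3]) (simp add: word_eval_Cons fr_gaff gaff_comp)
  next
    case F4 then show ?thesis using h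
      by (intro exI[of _ m1] exI[of _ "1-m2"] exI[of _ m3]) (simp add: word_eval_Cons fr_gaff gaff_comp algebra_simps)
  next
    case F5 then show ?thesis using h
      by (intro exI[of _ m1] exI[of _ m2] exI[of _ "-m3"]) (simp add: word_eval_Cons fr_gaff gaff_comp)
  next
    case F6 then show ?thesis using h
      by (intro exI[of _ m1] exI[of _ m2] exI[of _ "1-m3"]) (simp add: word_eval_Cons fr_gaff gaff_comp algebra_simps)
  qed
qed




definition cof :: "bool \<Rightarrow> bool \<Rightarrow> bool \<Rightarrow> int \<Rightarrow> int \<Rightarrow> int \<Rightarrow> face \<Rightarrow> bit" where
  "cof e1 e2 e3 m1 m2 m3 i = (case i of F1 \<Rightarrow> of_bool (odd m1 \<noteq> e1) | F2 \<Rightarrow> of_bool (odd m1)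
     | F3 \<Rightarrow> of_bool (odd m2 \<noteq> e2) | F4 \<Rightarrow> of_bool (odd m2)
     | F5 \<Rightarrow> of_bool (odd m3 \<noteq> e3) | F6 \<Rightarrow> of_bool (odd m3))"

definition Cl :: "(face \<Rightarrow> bit^'k) \<Rightarrow> bool \<Rightarrow> bool \<Rightarrow> bool \<Rightarrow> int \<Rightarrow> int \<Rightarrow> int \<Rightarrow> bool" where
  "Cl lam e1 e2 e3 m1 m2 m3 \<longleftrightarrow> (\<Sum>i\<in>UNIV. cof e1 e2 e3 m1 m2 m3 i *s lam i) = 0"

lemma cox_closed: "h \<in> coxeter_group \<Longrightarrow> face_reflection i \<circ> h \<in> coxeter_group"
  unfolding coxeter_group_def by (auto simp flip: word_eval_Cons)

lemma cox_id: "id \<in> coxeter_group"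
  unfolding coxeter_group_def by (auto simp flip: word_eval_Nil)

lemma gaff_word: "gaff e1 e2 e3 (2 * of_int m1) (2 * of_int m2) (2 * of_int m3) \<in> coxeter_group"
proof -
  let ?W = coxeter_group
  have f1: "gaff e1 False False 0 0 0 \<circ> h \<in> ?W" if "h \<in> ?W" for h
    using cox_closed[OF that, of F1] that by (cases e1) (simp_all add: fr_gaff gaff_id)
  have f2: "gaff False e2 False 0 0 0 \<circ> h \<in> ?W" if "h \<in> ?W" for h
    using cox_closed[OF that, of F3] that by (cases e2) (simp_all add: fr_gaff gaff_id)
  have f3: "gaff False False e3 0 0 0 \<circ> h \<in> ?W" if "h \<in> ?W" for h
    using cox_closed[OF that, of F5] that by (cases e3) (simp_all add: fr_gaff gaff_id)
  have e: "gaff e1 e2 e3 0 0 0 \<in> ?W"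
    using f1[OF f2[OF f3[OF cox_id]]] by (simp add: gaff_comp)
  have t1: "gaff False False False 2 0 0 \<circ> h \<in> ?W" "gaff False False False (-2) 0 0 \<circ> h \<in> ?W"
    if "h \<in> ?W" for h
    using cox_closed[OF cox_closed[OF that, of F1], of F2] cox_closed[OF cox_closed[OF that, of F2], of F1]
    by (simp_all add: fr_gaff gaff_comp o_assoc)
  have t2: "gaff False False False 0 2 0 \<circ> h \<in> ?W" "gaff False False False 0 (-2) 0 \<circ> h \<in> ?W"
    if "h \<in> ?W" for h
    using cox_closed[OF cox_closed[OF that, of F3], of F4] cox_closed[OF cox_closed[OF that, of F4], of F3]
    by (simp_all add: fr_gaff gaff_comp o_assoc)
  have t3: "gaff False False False 0 0 2 \<circ> h \<in> ?W" "gaff False False False 0 0 (-2) \<circ> h \<in> ?W"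
    if "h \<in> ?W" for h
    using cox_closed[OF cox_closed[OF that, of F5], of F6] cox_closed[OF cox_closed[OF that, of F6], of F5]
    by (simp_all add: fr_gaff gaff_comp o_assoc)
  have s3: "gaff False False False (of_int m3 * 0) (of_int m3 * 0) (of_int m3 * 2) \<circ> gaff e1 e2 e3 0 0 0 \<in> ?W"
    by (rule gen_group_pow[OF _ _ e]) (use t3 in simp_all)
  have s2: "gaff False False False (of_int m2 * 0) (of_int m2 * 2) (of_int m2 * 0) \<circ>
     (gaff False False False (of_int m3 * 0) (of_int m3 * 0) (of_int m3 * 2) \<circ> gaff e1 e2 e3 0 0 0) \<in> ?W"
    by (rule gen_group_pow[OF _ _ s3]) (use t2 in simp_all)
  have s1: "gaff False False False (of_int m1 * 2) (of_int m1 * 0) (of_int m1 * 0) \<circ>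
     (gaff False False False (of_int m2 * 0) (of_int m2 * 2) (of_int m2 * 0) \<circ>
     (gaff False False False (of_int m3 * 0) (of_int m3 * 0) (of_int m3 * 2) \<circ> gaff e1 e2 e3 0 0 0)) \<in> ?W"
    by (rule gen_group_pow[OF _ _ s2]) (use t1 in simp_all)
  then show ?thesis by (simp add: gaff_comp o_assoc mult.commute)
qed

lemma cof_count:
  assumes "odd m1 \<longleftrightarrow> odd (count_list w F2)" "odd m2 \<longleftrightarrow> odd (count_list w F4)"
     "odd m3 \<longleftrightarrow> odd (count_list w F6)"
  shows "cof (odd (count_list w F1 + count_list w F2))
      (odd (count_list w F3 + count_list w F4)) (odd (count_list w F5 + count_list w F6)) m1 m2 m3 i
     = of_nat (count_list w i)"
  using assms by (cases i) (auto simp: cof_def of_nat_bit)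

lemma kernel_eq:
  fixes lam :: "face \<Rightarrow> bit^'k"
  shows "colouring_kernel lam = {gaff e1 e2 e3 (2 * of_int m1) (2 * of_int m2) (2 * of_int m3)
     | e1 e2 e3 m1 m2 m3. Cl lam e1 e2 e3 m1 m2 m3}"
proof (intro set_eqI iffI)
  fix g assume "g \<in> colouring_kernel lam"
  then obtain w where g: "g = word_eval w" and s: "sum_list (map lam w) = 0"
    unfolding colouring_kernel_def by blast
  obtain m1 m2 m3 where h: "word_eval w = gaff (odd (count_list w F1 + count_list w F2))
      (odd (count_list w F3 + count_list w F4)) (odd (count_list w F5 + count_list w F6))
      (2 * of_int m1) (2 * of_int m2) (2 * of_int m3)"
     "(odd m1 \<longleftrightarrow> odd (count_list w F2))" "(odd m2 \<longleftrightarrow> odd (count_list w F4))"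
     "(odd m3 \<longleftrightarrow> odd (count_list w F6))" using word_gaff by blast
  have "Cl lam (odd (count_list w F1 + count_list w F2))
      (odd (count_list w F3 + count_list w F4)) (odd (count_list w F5 + count_list w F6)) m1 m2 m3"
    unfolding Cl_def cof_count[OF h(2-4)] using s sum_list_count[of lam w] by simp
  then show "g \<in> {gaff e1 e2 e3 (2 * of_int m1) (2 * of_int m2) (2 * of_int m3)
     | e1 e2 e3 m1 m2 m3. Cl lam e1 e2 e3 m1 m2 m3}"
    using g h(1) by blast
next
  fix g assume "g \<in> {gaff e1 e2 e3 (2 * of_int m1) (2 * of_int m2) (2 * of_int m3)
     | e1 e2 e3 m1 m2 m3. Cl lam e1 e2 e3 m1 m2 m3}"
  then obtain e1 e2 e3 m1 m2 m3 where g: "g = gaff e1 e2 e3 (2 * of_int m1) (2 * of_int m2) (2 * of_int m3)"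
    and c: "Cl lam e1 e2 e3 m1 m2 m3" by blast
  have "g \<in> {word_eval w | w. True}" using gaff_word[of e1 e2 e3 m1 m2 m3] g
    unfolding coxeter_group_def by simp
  then obtain w where w: "word_eval w = g" by auto
  obtain n1 n2 n3 where h: "word_eval w = gaff (odd (count_list w F1 + count_list w F2))
      (odd (count_list w F3 + count_list w F4)) (odd (count_list w F5 + count_list w F6))
      (2 * of_int n1) (2 * of_int n2) (2 * of_int n3)"
     "(odd n1 \<longleftrightarrow> odd (count_list w F2))" "(odd n2 \<longleftrightarrow> odd (count_list w F4))"
     "(odd n3 \<longleftrightarrow> odd (count_list w F6))" using word_gaff by blast
  have eq: "e1 = odd (count_list w F1 + count_list w F2)" "e2 = odd (count_list w F3 + count_list w F4)"
    "e3 = odd (count_list w F5 + count_list w F6)" "m1 = n1" "m2 = n2" "m3 = n3"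
    using h(1) w g by (simp_all add: gaff_eq_iff)
  have "sum_list (map lam w) = 0"
    using c unfolding Cl_def eq sum_list_count[of lam w] cof_count[OF h(2-4)] .
  then show "g \<in> colouring_kernel lam" using w unfolding colouring_kernel_def by blast
qed




declare add_bit_eq_xor[simp del] mult_bit_eq_and[simp del]

lemma if_smult: "(if P then (1::'a::ring_1) else 0) *s x = (if P then x else 0)"
  by simp

lemma sum_delta_minus:
  fixes x s :: "'a::finite \<Rightarrow> 'b::comm_ring_1"
  shows "(\<Sum>i\<in>UNIV. ((if i = j then 1 else 0) - s i) * x i) = x j - (\<Sum>i\<in>UNIV. s i * x i)"
proof -
  have "(\<Sum>i\<in>UNIV. ((if i = j then 1 else 0) - s i) * x i) =
     (\<Sum>i\<in>UNIV. (if i = j then x i else 0)) - (\<Sum>i\<in>UNIV. s i * x i)"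
  proof -
    have "(\<Sum>i\<in>UNIV. (if i = j then 1 else 0) * x i) = (\<Sum>i\<in>UNIV. (if i = j then x i else 0))"
      by (rule sum.cong) auto
    then show ?thesis by (simp add: left_diff_distrib sum_subtractf)
  qed
  then show ?thesis by simp
qed

lemma bit_add_eq0: "(a::bit) + b = 0 \<longleftrightarrow> a = b"
  by (cases a; cases b) simp_all

lemma span_repr:
  fixes f :: "'a::finite \<Rightarrow> 'b::field^'n"
  shows "vec.span (range f) \<subseteq> {\<Sum>i\<in>UNIV. c i *s f i | c. True}"
proof (rule vec.span_minimal)
  show "range f \<subseteq> {\<Sum>i\<in>UNIV. c i *s f i | c. True}"
  proof
    fix y assume "y \<in> range f"
    then obtain j where y: "y = f j" by blast
    have "(\<Sum>i\<in>UNIV. (if i = j then 1 else 0) *s f i) = f j"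
      by (simp add: if_smult)
    then show "y \<in> {\<Sum>i\<in>UNIV. c i *s f i | c. True}" unfolding y
      by (intro CollectI exI[of _ "\<lambda>i. if i = j then 1 else 0"]) simp
  qed
  show "vec.subspace {\<Sum>i\<in>UNIV. c i *s f i | c. True}"
  proof (rule vec.subspaceI)
    show "0 \<in> {\<Sum>i\<in>UNIV. c i *s f i | c. True}"
      by (rule CollectI, rule exI[of _ "\<lambda>_. 0"]) simp
    fix x y assume "x \<in> {\<Sum>i\<in>UNIV. c i *s f i | c. True}" "y \<in> {\<Sum>i\<in>UNIV. c i *s f i | c. True}"
    then obtain c d where xy: "x = (\<Sum>i\<in>UNIV. c i *s f i)" "y = (\<Sum>i\<in>UNIV. d i *s f i)" by blast
    have "x + y = (\<Sum>i\<in>UNIV. (c i + d i) *s f i)"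
      unfolding xy by (simp add: vec_eq_iff sum.distrib algebra_simps)
    then show "x + y \<in> {\<Sum>i\<in>UNIV. c i *s f i | c. True}"
      by (intro CollectI exI[of _ "\<lambda>i. c i + d i"]) simp
  next
    fix a x assume "x \<in> {\<Sum>i\<in>UNIV. c i *s f i | c. True}"
    then obtain c where xy: "x = (\<Sum>i\<in>UNIV. c i *s f i)" by blast
    have "a *s x = (\<Sum>i\<in>UNIV. (a * c i) *s f i)"
      unfolding xy by (simp add: vec_eq_iff sum_distrib_left algebra_simps)
    then show "a *s x \<in> {\<Sum>i\<in>UNIV. c i *s f i | c. True}"
      by (intro CollectI exI[of _ "\<lambda>i. a * c i"]) simp
  qed
qed

definition relc :: "(face \<Rightarrow> bit^'k) \<Rightarrow> (face \<Rightarrow> bit) \<Rightarrow> bool" where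
  "relc lam c \<longleftrightarrow> (\<Sum>i\<in>UNIV. c i *s lam i) = 0"

lemma relc_comp: "relc lam c \<longleftrightarrow> (\<forall>m. (\<Sum>i\<in>UNIV. c i * lam i $ m) = 0)"
  unfolding relc_def by (simp add: vec_eq_iff)

lemma row_perp:
  fixes lam :: "face \<Rightarrow> bit^'k"
  assumes "v \<in> row_space lam" "relc lam c"
  shows "(\<Sum>i\<in>UNIV. c i * v $ i) = 0"
proof -
  from assms(1) span_repr[of "defining_row lam"] obtain w where
    v: "v = (\<Sum>m\<in>UNIV. w m *s defining_row lam m)"
    unfolding row_space_def by blast
  have "(\<Sum>i\<in>UNIV. c i * v $ i) = (\<Sum>i\<in>UNIV. \<Sum>m\<in>UNIV. w m * (c i * lam i $ m))"
    unfolding v by (simp add: defining_row_def sum_distrib_left algebra_simps)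
  also have "\<dots> = (\<Sum>m\<in>UNIV. w m * (\<Sum>i\<in>UNIV. c i * lam i $ m))"
    by (subst sum.swap) (simp add: sum_distrib_left)
  also have "\<dots> = 0" using assms(2) unfolding relc_comp by simp
  finally show ?thesis .
qed

lemma perp_row:
  fixes lam :: "face \<Rightarrow> bit^'k"
  assumes col: "colouring lam"
    and perp: "\<And>c. relc lam c \<Longrightarrow> (\<Sum>i\<in>UNIV. c i * v $ i) = 0"
  shows "v \<in> row_space lam"
proof -
  have "\<exists>d. (\<Sum>i\<in>UNIV. d i *s lam i) = axis m 1" for m
  proof -
    have "axis m 1 \<in> vec.span (range lam)" using col unfolding colouring_def by simp
    then have "axis m 1 \<in> {\<Sum>i\<in>UNIV. c i *s lam i | c. True}" using span_repr[of lam] by blast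
    then obtain c where "axis m 1 = (\<Sum>i\<in>UNIV. c i *s lam i)" by blast
    then show ?thesis by metis
  qed
  then obtain d where d: "\<And>m. (\<Sum>i\<in>UNIV. d m i *s lam i) = axis m 1" by metis
  have dc: "(\<Sum>i\<in>UNIV. d m i * lam i $ m') = (if m = m' then 1 else 0)" for m m'
    using arg_cong[OF d[of m], of "\<lambda>x. x $ m'"] by (simp add: axis_def)
  define w where "w m = (\<Sum>i\<in>UNIV. d m i * v $ i)" for m
  have vj: "v $ j = (\<Sum>m\<in>UNIV. w m * lam j $ m)" for j
  proof -
    define c where "c i = (if i = j then 1 else 0) - (\<Sum>m\<in>UNIV. lam j $ m * d m i)" for i
    have "relc lam c"
      unfolding relc_comp
    proof
      fix m'
      have "(\<Sum>i\<in>UNIV. c i * lam i $ m') =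
        lam j $ m' - (\<Sum>i\<in>UNIV. (\<Sum>m\<in>UNIV. lam j $ m * d m i) * lam i $ m')"
        unfolding c_def by (rule sum_delta_minus)
      also have "\<dots> = lam j $ m' - (\<Sum>i\<in>UNIV. \<Sum>m\<in>UNIV. lam j $ m * (d m i * lam i $ m'))"
        by (simp only: sum_distrib_right mult.assoc)
      also have "\<dots> = lam j $ m' - (\<Sum>m\<in>UNIV. lam j $ m * (\<Sum>i\<in>UNIV. d m i * lam i $ m'))"
        by (subst sum.swap) (simp add: sum_distrib_left del: add_bit_eq_xor mult_bit_eq_and)
      also have "\<dots> = 0"
        by (simp add: dc if_distrib cong: if_cong del: add_bit_eq_xor mult_bit_eq_and)
      finally show "(\<Sum>i\<in>UNIV. c i * lam i $ m') = 0" .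
    qed
    then have "(\<Sum>i\<in>UNIV. c i * v $ i) = 0" by (rule perp)
    moreover have "(\<Sum>i\<in>UNIV. c i * v $ i) = v $ j - (\<Sum>m\<in>UNIV. lam j $ m * w m)"
    proof -
      have "(\<Sum>i\<in>UNIV. c i * v $ i) = v $ j - (\<Sum>i\<in>UNIV. (\<Sum>m\<in>UNIV. lam j $ m * d m i) * v $ i)"
        unfolding c_def by (rule sum_delta_minus)
      also have "\<dots> = v $ j - (\<Sum>i\<in>UNIV. \<Sum>m\<in>UNIV. lam j $ m * (d m i * v $ i))"
        by (simp only: sum_distrib_right mult.assoc)
      also have "\<dots> = v $ j - (\<Sum>m\<in>UNIV. lam j $ m * w m)"
        by (subst sum.swap) (simp add: w_def sum_distrib_left del: add_bit_eq_xor mult_bit_eq_and)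
      finally show ?thesis by simp
    qed
    ultimately show ?thesis by (simp add: mult.commute bit_add_eq0)
  qed
  have "v = (\<Sum>m\<in>UNIV. w m *s defining_row lam m)"
    by (simp add: vec_eq_iff vj defining_row_def mult.commute del: add_bit_eq_xor mult_bit_eq_and)
  also have "\<dots> \<in> row_space lam"
    unfolding row_space_def
    by (intro vec.span_sum vec.span_scale vec.span_base) simp
  finally show ?thesis .
qed




lemma sum_face: "(\<Sum>i\<in>UNIV. f i) = f F1 + f F2 + f F3 + f F4 + f F5 + f F6"
  by (simp add: UNIV_face algebra_simps)

lemma of_bool_add_bit: "(of_bool a + of_bool b :: bit) = of_bool (a \<noteq> b)"
  by (cases a; cases b) simp_all

lemma cof_add: "cof (e1 \<noteq> f1) (e2 \<noteq> f2) (e3 \<noteq> f3) (m1 + n1) (m2 + n2) (m3 + n3) i =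
   cof e1 e2 e3 m1 m2 m3 i + cof f1 f2 f3 n1 n2 n3 i"
  by (cases i) (auto simp: cof_def of_bool_add_bit)

lemma Cl_add:
  assumes "Cl lam e1 e2 e3 m1 m2 m3" "Cl lam f1 f2 f3 n1 n2 n3"
  shows "Cl lam (e1 \<noteq> f1) (e2 \<noteq> f2) (e3 \<noteq> f3) (m1 + n1) (m2 + n2) (m3 + n3)"
  using assms unfolding Cl_def cof_add by (simp add: vector_sadd_rdistrib sum.distrib)

lemma Cl_par:
  assumes "odd m1 = odd n1" "odd m2 = odd n2" "odd m3 = odd n3"
  shows "Cl lam e1 e2 e3 m1 m2 m3 = Cl lam e1 e2 e3 n1 n2 n3"
proof -
  have "cof e1 e2 e3 m1 m2 m3 = cof e1 e2 e3 n1 n2 n3"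
    using assms by (auto simp: fun_eq_iff cof_def split: face.split)
  then show ?thesis unfolding Cl_def by simp
qed

lemma Cl_zero: "Cl lam False False False 0 0 0"
  unfolding Cl_def by (simp add: cof_def sum_face)

lemma det_gaff:
  "det (matrix (\<lambda>x. gaff e1 e2 e3 t1 t2 t3 x - gaff e1 e2 e3 t1 t2 t3 0)) = sg e1 * sg e2 * sg e3"
  by (simp add: det_3 matrix_def gaff_def axis_def)

lemma orient_Cl:
  assumes "orientable_colouring lam" "Cl lam e1 e2 e3 m1 m2 m3"
  shows "e3 = (e1 \<noteq> e2)"
proof -
  have "gaff e1 e2 e3 (2 * of_int m1) (2 * of_int m2) (2 * of_int m3) \<in> colouring_kernel lam"
    unfolding kernel_eq using assms(2) by blast
  then have "det (matrix (\<lambda>x. gaff e1 e2 e3 (2 * of_int m1) (2 * of_int m2) (2 * of_int m3) x -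
      gaff e1 e2 e3 (2 * of_int m1) (2 * of_int m2) (2 * of_int m3) 0)) > 0"
    using assms(1) unfolding orientable_colouring_def by blast
  then have "sg e1 * sg e2 * sg e3 > 0" by (simp only: det_gaff)
  then show ?thesis by (cases e1; cases e2; cases e3) simp_all
qed

lemma vec_add_eq0: "(a::bit^'k) + b = 0 \<longleftrightarrow> a = b"
  by (simp add: vec_eq_iff bit_add_eq0)

lemma proper_neq:
  assumes "proper_colouring lam" "a \<in> {F1, F2}" "b \<in> {F3, F4}" "c \<in> {F5, F6}"
  shows "lam a \<noteq> lam b" "lam a \<noteq> lam c" "lam b \<noteq> lam c"
proof -
  have "card {lam a, lam b, lam c} = 3" using assms unfolding proper_colouring_def by blast
  then show "lam a \<noteq> lam b" "lam a \<noteq> lam c" "lam b \<noteq> lam c"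
    by (auto simp: card_insert_if split: if_splits)
qed

lemma proper_Cl:
  assumes "proper_colouring lam"
  shows "Cl lam True True False m1 m2 m3 \<Longrightarrow> odd m3"
    "Cl lam True False True m1 m2 m3 \<Longrightarrow> odd m2"
    "Cl lam False True True m1 m2 m3 \<Longrightarrow> odd m1"
proof -
  note pn = proper_neq[OF assms]
  show "Cl lam True True False m1 m2 m3 \<Longrightarrow> odd m3"
    using pn(1)[of F1 F3 F5] pn(1)[of F2 F3 F5] pn(1)[of F1 F4 F5] pn(1)[of F2 F4 F5]
    by (cases "odd m1"; cases "odd m2"; cases "odd m3") (auto simp: Cl_def cof_def sum_face vec_add_eq0)
  show "Cl lam True False True m1 m2 m3 \<Longrightarrow> odd m2"
    using pn(2)[of F1 F3 F5] pn(2)[of F2 F3 F5] pn(2)[of F1 F3 F6] pn(2)[of F2 F3 F6]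
    by (cases "odd m1"; cases "odd m2"; cases "odd m3") (auto simp: Cl_def cof_def sum_face vec_add_eq0)
  show "Cl lam False True True m1 m2 m3 \<Longrightarrow> odd m1"
    using pn(3)[of F1 F3 F5] pn(3)[of F1 F4 F5] pn(3)[of F1 F3 F6] pn(3)[of F1 F4 F6]
    by (cases "odd m1"; cases "odd m2"; cases "odd m3") (auto simp: Cl_def cof_def sum_face vec_add_eq0)
qed




lemma Cl_relc: "Cl lam e1 e2 e3 m1 m2 m3 \<longleftrightarrow> relc lam (cof e1 e2 e3 m1 m2 m3)"
  unfolding Cl_def relc_def ..

lemma of_bool_bit_eq: "of_bool (c = (1::bit)) = c"
  by (cases c) simp_all

lemma relc_Cl:
  assumes "relc lam c"
  shows "\<exists>e1 e2 e3 m1 m2 m3. Cl lam e1 e2 e3 m1 m2 m3 \<and> e1 = (c F1 \<noteq> c F2) \<and>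
     e2 = (c F3 \<noteq> c F4) \<and> e3 = (c F5 \<noteq> c F6)"
proof -
  let ?m = "\<lambda>f. if c f = 1 then 1 else (0::int)"
  have "cof (c F1 \<noteq> c F2) (c F3 \<noteq> c F4) (c F5 \<noteq> c F6) (?m F2) (?m F4) (?m F6) = c"
  proof
    fix i show "cof (c F1 \<noteq> c F2) (c F3 \<noteq> c F4) (c F5 \<noteq> c F6) (?m F2) (?m F4) (?m F6) i = c i"
      by (cases i; cases "c F1"; cases "c F2"; cases "c F3"; cases "c F4"; cases "c F5"; cases "c F6")
        (simp_all add: cof_def)
  qed
  then show ?thesis using assms unfolding Cl_relc by metis
qed

lemma axis_sum: "(\<Sum>i\<in>UNIV. c i * (axis p 1 + axis q 1 :: bit^face) $ i) = c p + c q"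
proof -
  have "(\<Sum>i\<in>UNIV. c i * (axis p 1 + axis q 1 :: bit^face) $ i) =
     (\<Sum>i\<in>UNIV. (if i = p then c i else 0) + (if i = q then c i else 0))"
    by (rule sum.cong) (auto simp: axis_def)
  then show ?thesis by (simp only: sum.distrib) simp
qed

lemma row_t:
  fixes lam :: "face \<Rightarrow> bit^'k"
  assumes "Cl lam e1 e2 e3 m1 m2 m3"
  shows "axis F1 1 + axis F2 1 \<in> row_space lam \<Longrightarrow> \<not> e1"
    "axis F3 1 + axis F4 1 \<in> row_space lam \<Longrightarrow> \<not> e2"
    "axis F5 1 + axis F6 1 \<in> row_space lam \<Longrightarrow> \<not> e3"
proof -
  have r: "relc lam (cof e1 e2 e3 m1 m2 m3)" using assms Cl_relc by blast
  show "axis F1 1 + axis F2 1 \<in> row_space lam \<Longrightarrow> \<not> e1"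
    using row_perp[OF _ r, of "axis F1 1 + axis F2 1"]
    by (simp only: axis_sum) (auto simp: cof_def of_bool_add_bit)
  show "axis F3 1 + axis F4 1 \<in> row_space lam \<Longrightarrow> \<not> e2"
    using row_perp[OF _ r, of "axis F3 1 + axis F4 1"]
    by (simp only: axis_sum) (auto simp: cof_def of_bool_add_bit)
  show "axis F5 1 + axis F6 1 \<in> row_space lam \<Longrightarrow> \<not> e3"
    using row_perp[OF _ r, of "axis F5 1 + axis F6 1"]
    by (simp only: axis_sum) (auto simp: cof_def of_bool_add_bit)
qed

lemma row_t_conv:
  fixes lam :: "face \<Rightarrow> bit^'k"
  assumes col: "colouring lam"
  shows "(\<And>e1 e2 e3 m1 m2 m3. Cl lam e1 e2 e3 m1 m2 m3 \<Longrightarrow> \<not> e1) \<Longrightarrow> axis F1 1 + axis F2 1 \<in> row_space lam"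
    "(\<And>e1 e2 e3 m1 m2 m3. Cl lam e1 e2 e3 m1 m2 m3 \<Longrightarrow> \<not> e2) \<Longrightarrow> axis F3 1 + axis F4 1 \<in> row_space lam"
    "(\<And>e1 e2 e3 m1 m2 m3. Cl lam e1 e2 e3 m1 m2 m3 \<Longrightarrow> \<not> e3) \<Longrightarrow> axis F5 1 + axis F6 1 \<in> row_space lam"
proof -
  assume h: "\<And>e1 e2 e3 m1 m2 m3. Cl lam e1 e2 e3 m1 m2 m3 \<Longrightarrow> \<not> e1"
  show "axis F1 1 + axis F2 1 \<in> row_space lam"
  proof (rule perp_row[OF col])
    fix c assume "relc lam c"
    from relc_Cl[OF this] h have "c F1 = c F2" by blast
    then show "(\<Sum>i\<in>UNIV. c i * (axis F1 1 + axis F2 1 :: bit^face) $ i) = 0"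
      by (simp only: axis_sum bit_add_eq0)
  qed
next
  assume h: "\<And>e1 e2 e3 m1 m2 m3. Cl lam e1 e2 e3 m1 m2 m3 \<Longrightarrow> \<not> e2"
  show "axis F3 1 + axis F4 1 \<in> row_space lam"
  proof (rule perp_row[OF col])
    fix c assume "relc lam c"
    from relc_Cl[OF this] h have "c F3 = c F4" by blast
    then show "(\<Sum>i\<in>UNIV. c i * (axis F3 1 + axis F4 1 :: bit^face) $ i) = 0"
      by (simp only: axis_sum bit_add_eq0)
  qed
next
  assume h: "\<And>e1 e2 e3 m1 m2 m3. Cl lam e1 e2 e3 m1 m2 m3 \<Longrightarrow> \<not> e3"
  show "axis F5 1 + axis F6 1 \<in> row_space lam"
  proof (rule perp_row[OF col])
    fix c assume "relc lam c"
    from relc_Cl[OF this] h have "c F5 = c F6" by blast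
    then show "(\<Sum>i\<in>UNIV. c i * (axis F5 1 + axis F6 1 :: bit^face) $ i) = 0"
      by (simp only: axis_sum bit_add_eq0)
  qed
qed




lemma continuous_on_vec3 [continuous_intros]:
  assumes "continuous_on S f" "continuous_on S g" "continuous_on S h"
  shows "continuous_on S (\<lambda>x. vec3 (f x) (g x) (h x) :: real^3)"
proof -
  have eq: "(\<lambda>x. vec3 (f x) (g x) (h x) :: real^3) = (\<lambda>x. \<chi> i. if i = 1 then f x else if i = 2 then g x else h x)"
    by (auto simp: fun_eq_iff vec3_eq_iff)
  show ?thesis unfolding eq
  proof (intro continuous_on_vec_lambda)
    fix i :: 3
    show "continuous_on S (\<lambda>x. if i = 1 then f x else if i = 2 then g x else h x)"
      by (cases "i = 1"; cases "i = 2") (simp_all add: assms)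
  qed
qed

locale latt =
  fixes N :: "int \<Rightarrow> int \<Rightarrow> int \<Rightarrow> bool"
  assumes Nadd: "\<And>a b c a' b' c'. N a b c \<Longrightarrow> N a' b' c' \<Longrightarrow> N (a+a') (b+b') (c+c')"
    and Nscal: "\<And>k a b c. N a b c \<Longrightarrow> N (k*a) (k*b) (k*c)"
    and N2: "N 2 0 0" "N 0 2 0" "N 0 0 2"
begin

lemma Nsub: "N a b c \<Longrightarrow> N a' b' c' \<Longrightarrow> N (a - k*a') (b - k*b') (c - k*c')"
  using Nadd[of a b c "(-k)*a'" "(-k)*b'" "(-k)*c'"] Nscal[of a' b' c' "-k"] by simp

lemma step3: "\<exists>d3>0. N 0 0 d3 \<and> (\<forall>c. N 0 0 c \<longrightarrow> d3 dvd c)"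
proof (cases "N 0 0 1")
  case True then show ?thesis by (intro exI[of _ 1]) simp
next
  case False
  have "even c" if "N 0 0 c" for c
  proof (rule ccontr)
    assume "odd c" then obtain j where "c = 2*j+1" using oddE by blast
    then have "N 0 0 1" using Nsub[OF that N2(3), of j] by simp
    with False show False by simp
  qed
  then show ?thesis using N2(3) by (intro exI[of _ 2]) auto
qed

lemma step2: "\<exists>d2>0. \<exists>r. N 0 d2 r \<and> (\<forall>b c. N 0 b c \<longrightarrow> d2 dvd b)"
proof (cases "\<exists>r. N 0 1 r")
  case True then show ?thesis by (intro exI[of _ 1]) auto
next
  case False
  have "even b" if "N 0 b c" for b c
  proof (rule ccontr)
    assume "odd b" then obtain j where "b = 2*j+1" using oddE by blast
    then have "N 0 1 c" using Nsub[OF that N2(2), of j] by simp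
    with False show False by blast
  qed
  then show ?thesis using N2(2) by (intro exI[of _ 2]) auto
qed

lemma step1: "\<exists>d1>0. \<exists>p q. N d1 p q \<and> (\<forall>a b c. N a b c \<longrightarrow> d1 dvd a)"
proof (cases "\<exists>p q. N 1 p q")
  case True then show ?thesis by (intro exI[of _ 1]) auto
next
  case False
  have "even a" if "N a b c" for a b c
  proof (rule ccontr)
    assume "odd a" then obtain j where "a = 2*j+1" using oddE by blast
    then have "N 1 b c" using Nsub[OF that N2(1), of j] by simp
    with False show False by blast
  qed
  then show ?thesis using N2(1) by (intro exI[of _ 2]) auto
qed

lemma hnf: "\<exists>d1 p q d2 r d3. d1 > 0 \<and> d2 > 0 \<and> d3 > 0 \<and>
   (\<forall>a b c. N a b c \<longleftrightarrow> (\<exists>k1 k2 k3. a = k1*d1 \<and> b = k1*p + k2*d2 \<and> c = k1*q + k2*r + k3*d3))"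
proof -
  obtain d1 p q where d1: "d1 > 0" "N d1 p q" "\<And>a b c. N a b c \<Longrightarrow> d1 dvd a" using step1 by blast
  obtain d2 r where d2: "d2 > 0" "N 0 d2 r" "\<And>b c. N 0 b c \<Longrightarrow> d2 dvd b" using step2 by blast
  obtain d3 where d3: "d3 > 0" "N 0 0 d3" "\<And>c. N 0 0 c \<Longrightarrow> d3 dvd c" using step3 by blast
  have "N a b c \<longleftrightarrow> (\<exists>k1 k2 k3. a = k1*d1 \<and> b = k1*p + k2*d2 \<and> c = k1*q + k2*r + k3*d3)" for a b c
  proof
    assume N: "N a b c"
    obtain k1 where k1: "a = d1 * k1" using d1(3)[OF N] by (auto elim: dvdE)
    have N1: "N 0 (b - k1*p) (c - k1*q)" using Nsub[OF N d1(2), of k1] k1 by (simp add: mult.commute)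
    obtain k2 where k2: "b - k1*p = d2 * k2" using d2(3)[OF N1] by (auto elim: dvdE)
    have N2': "N 0 0 (c - k1*q - k2*r)" using Nsub[OF N1 d2(2), of k2] k2 by (simp add: mult.commute)
    obtain k3 where k3: "c - k1*q - k2*r = d3 * k3" using d3(3)[OF N2'] by (auto elim: dvdE)
    show "\<exists>k1 k2 k3. a = k1*d1 \<and> b = k1*p + k2*d2 \<and> c = k1*q + k2*r + k3*d3"
      using k1 k2 k3 by (intro exI[of _ k1] exI[of _ k2] exI[of _ k3]) (simp add: algebra_simps)
  next
    assume "\<exists>k1 k2 k3. a = k1*d1 \<and> b = k1*p + k2*d2 \<and> c = k1*q + k2*r + k3*d3"
    then obtain k1 k2 k3 where k: "a = k1*d1" "b = k1*p + k2*d2" "c = k1*q + k2*r + k3*d3" by blast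
    have "N (k1*d1 + k2*0) (k1*p + k2*d2) (k1*q + k2*r)"
      by (rule Nadd[OF Nscal[OF d1(2)] Nscal[OF d2(2)]])
    then have "N (k1*d1 + k2*0 + k3*0) (k1*p + k2*d2 + k3*0) (k1*q + k2*r + k3*d3)"
      by (rule Nadd[OF _ Nscal[OF d3(2)]])
    then show "N a b c" using k by simp
  qed
  then show ?thesis using d1(1) d2(1) d3(1) by blast
qed

end




locale cpred =
  fixes C :: "bool \<Rightarrow> bool \<Rightarrow> bool \<Rightarrow> int \<Rightarrow> int \<Rightarrow> int \<Rightarrow> bool"
  assumes Cadd: "\<And>e1 e2 e3 m1 m2 m3 f1 f2 f3 n1 n2 n3. C e1 e2 e3 m1 m2 m3 \<Longrightarrow> C f1 f2 f3 n1 n2 n3 \<Longrightarrow>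
      C (e1 \<noteq> f1) (e2 \<noteq> f2) (e3 \<noteq> f3) (m1 + n1) (m2 + n2) (m3 + n3)"
    and Cpar: "\<And>e1 e2 e3 m1 m2 m3 n1 n2 n3. odd m1 = odd n1 \<Longrightarrow> odd m2 = odd n2 \<Longrightarrow> odd m3 = odd n3 \<Longrightarrow>
      C e1 e2 e3 m1 m2 m3 = C e1 e2 e3 n1 n2 n3"
    and Czero: "C False False False 0 0 0"
begin

definition KC :: "(real^3 \<Rightarrow> real^3) set" where
  "KC = {gaff e1 e2 e3 (2 * of_int m1) (2 * of_int m2) (2 * of_int m3) | e1 e2 e3 m1 m2 m3. C e1 e2 e3 m1 m2 m3}"

lemma orbit_rel_KC: "(x, y) \<in> orbit_rel KC \<longleftrightarrow>
  (\<exists>e1 e2 e3 m1 m2 m3. C e1 e2 e3 m1 m2 m3 \<and> y = gaff e1 e2 e3 (2 * of_int m1) (2 * of_int m2) (2 * of_int m3) x)"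
  unfolding orbit_rel_def KC_def by blast

lemma latt_N: "latt (C False False False)"
proof
  fix a b c a' b' c'
  assume "C False False False a b c" "C False False False a' b' c'"
  from Cadd[OF this] show "C False False False (a+a') (b+b') (c+c')" by simp
next
  fix k a b c assume h: "C False False False a b c"
  show "C False False False (k*a) (k*b) (k*c)"
  proof (cases "odd k")
    case True then show ?thesis using h Cpar[of "k*a" a "k*b" b "k*c" c] by simp
  next
    case False then show ?thesis using Czero Cpar[of "k*a" 0 "k*b" 0 "k*c" 0] by simp
  qed
next
  show "C False False False 2 0 0" "C False False False 0 2 0" "C False False False 0 0 2"
    using Czero Cpar[of 2 0 0 0 0 0] Cpar[of 0 0 2 0 0 0] Cpar[of 0 0 0 0 2 0] by simp_all
qed

lemma torus_case:
  assumes noflip: "\<And>e1 e2 e3 m1 m2 m3. C e1 e2 e3 m1 m2 m3 \<Longrightarrow> \<not> e1 \<and> \<not> e2 \<and> \<not> e3"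
  shows "orbit_space KC homeomorphic_space torus3"
proof -
  obtain d1 p q d2 r d3 where d: "d1 > 0" "d2 > 0" "d3 > 0"
    and N: "\<And>a b c. C False False False a b c \<longleftrightarrow> (\<exists>k1 k2 k3. a = k1*d1 \<and> b = k1*p + k2*d2 \<and> c = k1*q + k2*r + k3*d3)"
    using latt.hnf[OF latt_N] by blast
  define D1 where "D1 = real_of_int d1"
  define D2 where "D2 = real_of_int d2"
  define D3 where "D3 = real_of_int d3"
  define P where "P = real_of_int p"
  define Q where "Q = real_of_int q"
  define R where "R = real_of_int r"
  have D: "D1 \<noteq> 0" "D2 \<noteq> 0" "D3 \<noteq> 0" using d by (simp_all add: D1_def D2_def D3_def)
  define g :: "real^3 \<Rightarrow> real^3" where
    "g y = vec3 (2*D1*y$1) (2*(P*y$1 + D2*y$2)) (2*(Q*y$1 + R*y$2 + D3*y$3))" for y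
  define h :: "real^3 \<Rightarrow> real^3" where
    "h x = vec3 (x$1/(2*D1)) ((x$2/2 - P*(x$1/(2*D1)))/D2)
            ((x$3/2 - Q*(x$1/(2*D1)) - R*((x$2/2 - P*(x$1/(2*D1)))/D2))/D3)" for x
  have hg: "h (g y) = y" for y
    using D by (simp add: g_def h_def vec3_eq_iff field_simps)
  have gh: "g (h x) = x" for x
    using D by (simp add: g_def h_def vec3_eq_iff field_simps)
  have cg: "continuous_on UNIV g" unfolding g_def by (intro continuous_intros)
  have ch: "continuous_on UNIV h" unfolding h_def by (intro continuous_intros) (use D in auto)
  have gadd: "g (gaff False False False (of_int a) (of_int b) (of_int c) y) =
     gaff False False False (2 * of_int (a*d1)) (2 * of_int (a*p + b*d2)) (2 * of_int (a*q + b*r + c*d3)) (g y)"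
    for a b c y
    by (simp add: g_def gaff_def D1_def D2_def D3_def P_def Q_def R_def algebra_simps)
  have rel: "(g y, g y') \<in> orbit_rel KC \<longleftrightarrow> (y, y') \<in> orbit_rel ET" for y y'
  proof
    assume "(g y, g y') \<in> orbit_rel KC"
    then obtain e1 e2 e3 m1 m2 m3 where c: "C e1 e2 e3 m1 m2 m3" and
      e: "g y' = gaff e1 e2 e3 (2 * of_int m1) (2 * of_int m2) (2 * of_int m3) (g y)"
      unfolding orbit_rel_KC by blast
    from noflip[OF c] have "\<not> e1" "\<not> e2" "\<not> e3" by auto
    with c have "C False False False m1 m2 m3" by simp
    then obtain k1 k2 k3 where k: "m1 = k1*d1" "m2 = k1*p + k2*d2" "m3 = k1*q + k2*r + k3*d3"
      using N by blast
    have "g y' = g (gaff False False False (of_int k1) (of_int k2) (of_int k3) y)"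
      unfolding gadd e using `\<not> e1` `\<not> e2` `\<not> e3` k by simp
    then have "y' = gaff False False False (of_int k1) (of_int k2) (of_int k3) y"
      by (metis hg)
    then show "(y, y') \<in> orbit_rel ET" unfolding orbit_rel_ET by blast
  next
    assume "(y, y') \<in> orbit_rel ET"
    then obtain a b c where y': "y' = gaff False False False (of_int a) (of_int b) (of_int c) y"
      unfolding orbit_rel_ET by blast
    have "C False False False (a*d1) (a*p + b*d2) (a*q + b*r + c*d3)"
      using N by (auto simp: algebra_simps)
    then show "(g y, g y') \<in> orbit_rel KC"
      unfolding orbit_rel_KC y' gadd by blast
  qed
  have "orbit_space KC homeomorphic_space orbit_space ET"
    by (rule orbit_space_homeo[OF cg ch hg gh rel])
  then show ?thesis by (simp add: torus3_eq)
qed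

end




context cpred begin

lemma Cneg: "C e1 e2 e3 m1 m2 m3 \<Longrightarrow> C e1 e2 e3 (-m1) (-m2) (-m3)"
  using Cpar[of m1 "-m1" m2 "-m2" m3 "-m3" e1 e2 e3] by simp

lemma Csub: "C e1 e2 e3 m1 m2 m3 \<Longrightarrow> C f1 f2 f3 n1 n2 n3 \<Longrightarrow>
      C (e1 \<noteq> f1) (e2 \<noteq> f2) (e3 \<noteq> f3) (m1 - n1) (m2 - n2) (m3 - n3)"
  using Cadd[OF _ Cneg[of f1 f2 f3 n1 n2 n3]] by simp

lemma half_case:
  assumes A1: "\<And>e1 e2 e3 m1 m2 m3. C e1 e2 e3 m1 m2 m3 \<Longrightarrow> \<not> e3 \<and> e1 = e2"
    and A2: "\<exists>m1 m2 m3. C True True False m1 m2 m3"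
    and A3: "\<And>m1 m2 m3. C True True False m1 m2 m3 \<Longrightarrow> odd m3"
  shows "orbit_space KC homeomorphic_space half_turn_manifold"
proof -
  obtain a0 b0 c0 where m0: "C True True False a0 b0 c0" using A2 by blast
  have c0: "odd c0" using A3[OF m0] .
  have Nev: "even c" if "C False False False a b c" for a b c
  proof (rule ccontr)
    assume "odd c"
    have "C True True False (a0 + a) (b0 + b) (c0 + c)" using Cadd[OF m0 that] by simp
    from A3[OF this] c0 `odd c` show False by simp
  qed
  have N12: "C False False False a b c \<longleftrightarrow> even c \<and> C False False False a b 0" for a b c
  proof
    assume h: "C False False False a b c"
    then have "even c" by (rule Nev)
    then show "even c \<and> C False False False a b 0" using h Cpar[of a a b b c 0] by simp
  next
    assume "even c \<and> C False False False a b 0"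
    then show "C False False False a b c" using Cpar[of a a b b c 0] by simp
  qed
  have L: "latt (\<lambda>a b c. C False False False a b 0)"
  proof
    fix a b c a' b' c'
    assume "C False False False a b 0" "C False False False a' b' 0"
    from Cadd[OF this] show "C False False False (a+a') (b+b') 0" by simp
  next
    fix k a b c assume "C False False False a b 0"
    then have "C False False False (k*a) (k*b) (k*0)" using latt.Nscal[OF latt_N] by blast
    then show "C False False False (k*a) (k*b) 0" by simp
  next
    show "C False False False 2 0 0" "C False False False 0 2 0" "C False False False 0 0 0"
      using latt.N2[OF latt_N] Czero by simp_all
  qed
  obtain d1 p q d2 r d3 where d: "d1 > 0" "d2 > 0" "d3 > 0"
    and N: "\<And>a b c. C False False False a b 0 \<longleftrightarrow> (\<exists>k1 k2 k3. a = k1*d1 \<and> b = k1*p + k2*d2 \<and> c = k1*q + k2*r + k3*d3)"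
    using latt.hnf[OF L] by blast
  have N2: "C False False False a b 0 \<longleftrightarrow> (\<exists>k1 k2. a = k1*d1 \<and> b = k1*p + k2*d2)" for a b
    using N[of a b] N[of a b "0"] by (metis add_0_right mult_zero_right)
  have CT: "C True True False a b c \<longleftrightarrow> C False False False (a - a0) (b - b0) (c - c0)" for a b c
  proof
    assume "C True True False a b c"
    from Csub[OF this m0] show "C False False False (a - a0) (b - b0) (c - c0)" by simp
  next
    assume "C False False False (a - a0) (b - b0) (c - c0)"
    from Cadd[OF this m0] show "C True True False a b c" by simp
  qed
  define D1 where "D1 = real_of_int d1"
  define D2 where "D2 = real_of_int d2"
  define P where "P = real_of_int p"
  define A0 where "A0 = real_of_int a0"
  define B0 where "B0 = real_of_int b0"
  have D: "D1 \<noteq> 0" "D2 \<noteq> 0" using d by (simp_all add: D1_def D2_def)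
  define g :: "real^3 \<Rightarrow> real^3" where
    "g y = vec3 (2*D1*y$1 + A0) (2*(P*y$1 + D2*y$2) + B0) (2*y$3)" for y
  define h :: "real^3 \<Rightarrow> real^3" where
    "h x = vec3 ((x$1 - A0)/(2*D1)) (((x$2 - B0)/2 - P*((x$1 - A0)/(2*D1)))/D2) (x$3/2)" for x
  have hg: "h (g y) = y" for y
    using D by (simp add: g_def h_def vec3_eq_iff field_simps)
  have gh: "g (h x) = x" for x
    using D by (simp add: g_def h_def vec3_eq_iff field_simps)
  have cg: "continuous_on UNIV g" unfolding g_def by (intro continuous_intros)
  have ch: "continuous_on UNIV h" unfolding h_def by (intro continuous_intros) (use D in auto)
  have gF: "g (gaff False False False (of_int a) (of_int b) (of_int c) y) =
     gaff False False False (2 * of_int (a*d1)) (2 * of_int (a*p + b*d2)) (2 * of_int c) (g y)"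
    for a b c y
    by (simp add: g_def gaff_def D1_def D2_def P_def algebra_simps)
  have gT: "g (gaff True True False (of_int a) (of_int b) (of_int c) y) =
     gaff True True False (2 * of_int (a0 + a*d1)) (2 * of_int (b0 + a*p + b*d2)) (2 * of_int c) (g y)"
    for a b c y
    by (simp add: g_def gaff_def D1_def D2_def P_def A0_def B0_def algebra_simps)
  have rel: "(g y, g y') \<in> orbit_rel KC \<longleftrightarrow> (y, y') \<in> orbit_rel EH" for y y'
  proof
    assume "(g y, g y') \<in> orbit_rel KC"
    then obtain e1 e2 e3 m1 m2 m3 where c: "C e1 e2 e3 m1 m2 m3" and
      e: "g y' = gaff e1 e2 e3 (2 * of_int m1) (2 * of_int m2) (2 * of_int m3) (g y)"
      unfolding orbit_rel_KC by blast
    from A1[OF c] have e3: "\<not> e3" "e1 = e2" by auto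
    show "(y, y') \<in> orbit_rel EH"
    proof (cases e1)
      case False
      with c e3 have cF: "C False False False m1 m2 m3" by simp
      then have ev: "even m3" "C False False False m1 m2 0" using N12[of m1 m2 m3] by auto
      then obtain k1 k2 where k: "m1 = k1*d1" "m2 = k1*p + k2*d2" using N2 by blast
      have "g y' = g (gaff False False False (of_int k1) (of_int k2) (of_int m3) y)"
        unfolding gF e using False e3 k by simp
      then have "y' = gaff (odd m3) (odd m3) False (of_int k1) (of_int k2) (of_int m3) y"
        using ev(1) hg by metis
      then show ?thesis unfolding orbit_rel_EH by blast
    next
      case True
      with c e3 have cT: "C True True False m1 m2 m3" by simp
      then have od: "odd m3" using A3 by blast
      from cT have "C False False False (m1 - a0) (m2 - b0) (m3 - c0)" using CT[of m1 m2 m3] by blast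
      then have "C False False False (m1 - a0) (m2 - b0) 0" using N12[of "m1 - a0" "m2 - b0" "m3 - c0"] by blast
      then obtain k1 k2 where k: "m1 - a0 = k1*d1" "m2 - b0 = k1*p + k2*d2" using N2 by blast
      have k': "m1 = a0 + k1*d1" "m2 = b0 + k1*p + k2*d2" using k by simp_all
      have "g y' = g (gaff True True False (of_int k1) (of_int k2) (of_int m3) y)"
        unfolding gT e using True e3 k' by simp
      then have "y' = gaff (odd m3) (odd m3) False (of_int k1) (of_int k2) (of_int m3) y"
        using od hg by metis
      then show ?thesis unfolding orbit_rel_EH by blast
    qed
  next
    assume "(y, y') \<in> orbit_rel EH"
    then obtain a b c where y': "y' = gaff (odd c) (odd c) False (of_int a) (of_int b) (of_int c) y"
      unfolding orbit_rel_EH by blast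
    show "(g y, g y') \<in> orbit_rel KC"
    proof (cases "odd c")
      case False
      have "C False False False (a*d1) (a*p + b*d2) 0" using N2[of "a*d1" "a*p + b*d2"] by auto
      then have "C False False False (a*d1) (a*p + b*d2) c" using N12[of "a*d1" "a*p + b*d2" c] False by blast
      moreover have "g y' = gaff False False False (2 * of_int (a*d1)) (2 * of_int (a*p + b*d2)) (2 * of_int c) (g y)"
        unfolding y' using False gF by simp
      ultimately show ?thesis unfolding orbit_rel_KC by blast
    next
      case True
      have "C False False False (a*d1) (a*p + b*d2) 0" using N2[of "a*d1" "a*p + b*d2"] by auto
      then have "C False False False (a*d1) (a*p + b*d2) (c - c0)" using N12[of "a*d1" "a*p + b*d2" "c - c0"] True c0 by auto
      then have "C True True False (a0 + a*d1) (b0 + a*p + b*d2) c" using CT[of "a0 + a*d1" "b0 + a*p + b*d2" c] by simp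
      moreover have "g y' = gaff True True False (2 * of_int (a0 + a*d1)) (2 * of_int (b0 + a*p + b*d2)) (2 * of_int c) (g y)"
        unfolding y' using True gT by simp
      ultimately show ?thesis unfolding orbit_rel_KC by blast
    qed
  qed
  have "orbit_space KC homeomorphic_space orbit_space EH"
    by (rule orbit_space_homeo[OF cg ch hg gh rel])
  then show ?thesis by (simp add: half_eq)
qed

end




context cpred begin

lemma hw_case:
  assumes O: "\<And>e1 e2 e3 m1 m2 m3. C e1 e2 e3 m1 m2 m3 \<Longrightarrow> e3 = (e1 \<noteq> e2)"
    and P1: "\<And>m1 m2 m3. C True True False m1 m2 m3 \<Longrightarrow> odd m3"
    and P2: "\<And>m1 m2 m3. C True False True m1 m2 m3 \<Longrightarrow> odd m2"
    and P3: "\<And>m1 m2 m3. C False True True m1 m2 m3 \<Longrightarrow> odd m1"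
    and Ea: "\<exists>m1 m2 m3. C False True True m1 m2 m3"
    and Eb: "\<exists>m1 m2 m3. C True False True m1 m2 m3"
  shows "orbit_space KC homeomorphic_space hantzsche_wendt"
proof -
  obtain a1 p q where ma: "C False True True a1 p q" using Ea by blast
  obtain r b2 s where mb: "C True False True r b2 s" using Eb by blast
  have mc: "C True True False (a1 + r) (p + b2) (q + s)" using Cadd[OF ma mb] by simp
  have a1: "odd a1" using P3[OF ma] .
  have b2: "odd b2" using P2[OF mb] .
  have qs: "odd (q + s)" using P1[OF mc] .
  have Nev: "even m1 \<and> even m2 \<and> even m3" if "C False False False m1 m2 m3" for m1 m2 m3
  proof -
    have "odd (a1 + m1)" using P3[OF Cadd[OF ma that, simplified]] .
    moreover have "odd (b2 + m2)" using P2[OF Cadd[OF mb that, simplified]] .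
    moreover have "odd ((q + s) + m3)" using P1[OF Cadd[OF mc that, simplified]] .
    ultimately show ?thesis using a1 b2 qs by simp
  qed
  have Ceq: "even (m1 - n1) \<and> even (m2 - n2) \<and> even (m3 - n3)"
    if "C e1 e2 e3 m1 m2 m3" "C e1 e2 e3 n1 n2 n3" for e1 e2 e3 m1 m2 m3 n1 n2 n3
  proof -
    have "C False False False (m1 - n1) (m2 - n2) (m3 - n3)" using Csub[OF that] by simp
    from Nev[OF this] show ?thesis .
  qed
  define o1 where "o1 = r"
  define o2 where "o2 = p + 1"
  define o3 where "o3 = q"
  define g :: "real^3 \<Rightarrow> real^3" where
    "g y = vec3 (4*y$1 + of_int o1) (4*y$2 + of_int o2) (4*y$3 + of_int o3)" for y
  define h :: "real^3 \<Rightarrow> real^3" where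
    "h x = vec3 ((x$1 - of_int o1)/4) ((x$2 - of_int o2)/4) ((x$3 - of_int o3)/4)" for x
  have hg: "h (g y) = y" for y by (simp add: g_def h_def vec3_eq_iff)
  have gh: "g (h x) = x" for x by (simp add: g_def h_def vec3_eq_iff field_simps)
  have cg: "continuous_on UNIV g" unfolding g_def by (intro continuous_intros)
  have ch: "continuous_on UNIV h" unfolding h_def by (intro continuous_intros) auto
  have gW: "g (gaff e1 e2 e3 (of_int T1 / 2) (of_int T2 / 2) (of_int T3 / 2) y) =
     gaff e1 e2 e3 (2 * of_int (T1 + (if e1 then o1 else 0))) (2 * of_int (T2 + (if e2 then o2 else 0)))
        (2 * of_int (T3 + (if e3 then o3 else 0))) (g y)" for e1 e2 e3 T1 T2 T3 y
    by (cases e1; cases e2; cases e3) (simp_all add: g_def gaff_def algebra_simps)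
  have rel: "(g y, g y') \<in> orbit_rel KC \<longleftrightarrow> (y, y') \<in> orbit_rel EW" for y y'
  proof
    assume "(g y, g y') \<in> orbit_rel KC"
    then obtain e1 e2 e3 m1 m2 m3 where c: "C e1 e2 e3 m1 m2 m3" and
      e: "g y' = gaff e1 e2 e3 (2 * of_int m1) (2 * of_int m2) (2 * of_int m3) (g y)"
      unfolding orbit_rel_KC by blast
    have e3: "e3 = (e1 \<noteq> e2)" using O[OF c] .
    define T1 where "T1 = m1 - (if e1 then o1 else 0)"
    define T2 where "T2 = m2 - (if e2 then o2 else 0)"
    define T3 where "T3 = m3 - (if e3 then o3 else 0)"
    have hw: "hwc e1 e2 e3 T1 T2 T3"
    proof (cases e1; cases e2)
      assume "\<not> e1" "\<not> e2"
      then have "C False False False m1 m2 m3" using c e3 by simp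
      then show ?thesis using Nev `\<not> e1` `\<not> e2` e3 by (simp add: hwc_def T1_def T2_def T3_def)
    next
      assume "\<not> e1" "e2"
      then have "C False True True m1 m2 m3" using c e3 by simp
      from Ceq[OF this ma] a1 show ?thesis using `\<not> e1` `e2` e3
        by (simp add: hwc_def T1_def T2_def T3_def o2_def o3_def, presburger?)
    next
      assume "e1" "\<not> e2"
      then have "C True False True m1 m2 m3" using c e3 by simp
      from Ceq[OF this mb] b2 qs show ?thesis using `e1` `\<not> e2` e3
        by (simp add: hwc_def T1_def T2_def T3_def o1_def o3_def, presburger?)
    next
      assume "e1" "e2"
      then have "C True True False m1 m2 m3" using c e3 by simp
      from Ceq[OF this mc] a1 b2 qs show ?thesis using `e1` `e2` e3
        by (simp add: hwc_def T1_def T2_def T3_def o1_def o2_def, presburger?)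
    qed
    have "g y' = g (gaff e1 e2 e3 (of_int T1 / 2) (of_int T2 / 2) (of_int T3 / 2) y)"
      unfolding gW e by (simp add: T1_def T2_def T3_def)
    then have "y' = gaff e1 e2 e3 (of_int T1 / 2) (of_int T2 / 2) (of_int T3 / 2) y"
      using hg by metis
    then show "(y, y') \<in> orbit_rel EW" unfolding orbit_rel_EW using hw by blast
  next
    assume "(y, y') \<in> orbit_rel EW"
    then obtain e1 e2 e3 T1 T2 T3 where hw: "hwc e1 e2 e3 T1 T2 T3" and
      y': "y' = gaff e1 e2 e3 (of_int T1 / 2) (of_int T2 / 2) (of_int T3 / 2) y"
      unfolding orbit_rel_EW by blast
    define m1 where "m1 = T1 + (if e1 then o1 else 0)"
    define m2 where "m2 = T2 + (if e2 then o2 else 0)"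
    define m3 where "m3 = T3 + (if e3 then o3 else 0)"
    have hw': "e3 = (e1 \<noteq> e2)" "odd T1 = e2" "odd T2 = e3" "odd T3 = e1" using hw by (auto simp: hwc_def)
    have c: "C e1 e2 e3 m1 m2 m3"
    proof (cases e1; cases e2)
      assume "\<not> e1" "\<not> e2"
      then show ?thesis using Czero Cpar[of m1 0 m2 0 m3 0 False False False] hw'
        by (simp add: m1_def m2_def m3_def)
    next
      assume "\<not> e1" "e2"
      then show ?thesis using ma Cpar[of m1 a1 m2 p m3 q False True True] hw' a1
        by (simp add: m1_def m2_def m3_def o2_def o3_def)
    next
      assume "e1" "\<not> e2"
      then show ?thesis using mb Cpar[of m1 r m2 b2 m3 s True False True] hw' b2 qs
        by (simp add: m1_def m2_def m3_def o1_def o3_def, presburger?)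
    next
      assume "e1" "e2"
      then show ?thesis using mc Cpar[of m1 "a1 + r" m2 "p + b2" m3 "q + s" True True False] hw' a1 b2 qs
        by (simp add: m1_def m2_def m3_def o1_def o2_def, presburger?)
    qed
    have "g y' = gaff e1 e2 e3 (2 * of_int m1) (2 * of_int m2) (2 * of_int m3) (g y)"
      unfolding y' gW m1_def m2_def m3_def ..
    then show "(g y, g y') \<in> orbit_rel KC" unfolding orbit_rel_KC using c by blast
  qed
  have "orbit_space KC homeomorphic_space orbit_space EW"
    by (rule orbit_space_homeo[OF cg ch hg gh rel])
  then show ?thesis by (simp add: hw_eq)
qed

end




context cpred begin

lemma swap13_cpred: "cpred (\<lambda>e1 e2 e3 m1 m2 m3. C e3 e2 e1 m3 m2 m1)"
proof
  fix e1 e2 e3 m1 m2 m3 f1 f2 f3 n1 n2 n3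
  assume "C e3 e2 e1 m3 m2 m1" "C f3 f2 f1 n3 n2 n1"
  from Cadd[OF this] show "C (e3 \<noteq> f3) (e2 \<noteq> f2) (e1 \<noteq> f1) (m3 + n3) (m2 + n2) (m1 + n1)" .
next
  fix e1 e2 e3 m1 m2 m3 n1 n2 n3 :: int
  show "odd m1 = odd n1 \<Longrightarrow> odd m2 = odd n2 \<Longrightarrow> odd m3 = odd n3 \<Longrightarrow>
       C e3 e2 e1 m3 m2 m1 = C e3 e2 e1 n3 n2 n1" for e1 e2 e3 using Cpar[of m3 n3 m2 n2 m1 n1 e3 e2 e1] by simp
next
  show "C False False False 0 0 0" by (rule Czero)
qed

lemma swap23_cpred: "cpred (\<lambda>e1 e2 e3 m1 m2 m3. C e1 e3 e2 m1 m3 m2)"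
proof
  fix e1 e2 e3 m1 m2 m3 f1 f2 f3 n1 n2 n3
  assume "C e1 e3 e2 m1 m3 m2" "C f1 f3 f2 n1 n3 n2"
  from Cadd[OF this] show "C (e1 \<noteq> f1) (e3 \<noteq> f3) (e2 \<noteq> f2) (m1 + n1) (m3 + n3) (m2 + n2)" .
next
  fix e1 e2 e3 m1 m2 m3 n1 n2 n3 :: int
  show "odd m1 = odd n1 \<Longrightarrow> odd m2 = odd n2 \<Longrightarrow> odd m3 = odd n3 \<Longrightarrow>
       C e1 e3 e2 m1 m3 m2 = C e1 e3 e2 n1 n3 n2" for e1 e2 e3 using Cpar[of m1 n1 m3 n3 m2 n2 e1 e3 e2] by simp
next
  show "C False False False 0 0 0" by (rule Czero)
qed

lemma swap13_homeo:
  "orbit_space KC homeomorphic_space orbit_space (cpred.KC (\<lambda>e1 e2 e3 m1 m2 m3. C e3 e2 e1 m3 m2 m1))"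
proof -
  interpret C': cpred "\<lambda>e1 e2 e3 m1 m2 m3. C e3 e2 e1 m3 m2 m1" by (rule swap13_cpred)
  define g :: "real^3 \<Rightarrow> real^3" where "g y = vec3 (y$3) (y$2) (y$1)" for y
  have gg: "g (g y) = y" for y by (simp add: g_def vec3_eq_iff)
  have cg: "continuous_on UNIV g" unfolding g_def by (intro continuous_intros)
  have gs: "g (gaff e1 e2 e3 t1 t2 t3 y) = gaff e3 e2 e1 t3 t2 t1 (g y)" for e1 e2 e3 t1 t2 t3 y
    by (simp add: g_def gaff_def)
  have rel: "(g y, g y') \<in> orbit_rel KC \<longleftrightarrow> (y, y') \<in> orbit_rel C'.KC" for y y'
  proof
    assume "(g y, g y') \<in> orbit_rel KC"
    then obtain e1 e2 e3 m1 m2 m3 where c: "C e1 e2 e3 m1 m2 m3" and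
      e: "g y' = gaff e1 e2 e3 (2 * of_int m1) (2 * of_int m2) (2 * of_int m3) (g y)"
      unfolding orbit_rel_KC by blast
    have "y' = gaff e3 e2 e1 (2 * of_int m3) (2 * of_int m2) (2 * of_int m1) y"
      using arg_cong[OF e, of g] by (simp add: gg gs)
    then show "(y, y') \<in> orbit_rel C'.KC" unfolding C'.orbit_rel_KC using c by blast
  next
    assume "(y, y') \<in> orbit_rel C'.KC"
    then obtain e1 e2 e3 m1 m2 m3 where c: "C e3 e2 e1 m3 m2 m1" and
      e: "y' = gaff e1 e2 e3 (2 * of_int m1) (2 * of_int m2) (2 * of_int m3) y"
      unfolding C'.orbit_rel_KC by blast
    have "g y' = gaff e3 e2 e1 (2 * of_int m3) (2 * of_int m2) (2 * of_int m1) (g y)"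
      using e by (simp add: gs)
    then show "(g y, g y') \<in> orbit_rel KC" unfolding orbit_rel_KC using c by blast
  qed
  show ?thesis by (rule orbit_space_homeo[OF cg cg gg gg rel])
qed

lemma swap23_homeo:
  "orbit_space KC homeomorphic_space orbit_space (cpred.KC (\<lambda>e1 e2 e3 m1 m2 m3. C e1 e3 e2 m1 m3 m2))"
proof -
  interpret C': cpred "\<lambda>e1 e2 e3 m1 m2 m3. C e1 e3 e2 m1 m3 m2" by (rule swap23_cpred)
  define g :: "real^3 \<Rightarrow> real^3" where "g y = vec3 (y$1) (y$3) (y$2)" for y
  have gg: "g (g y) = y" for y by (simp add: g_def vec3_eq_iff)
  have cg: "continuous_on UNIV g" unfolding g_def by (intro continuous_intros)
  have gs: "g (gaff e1 e2 e3 t1 t2 t3 y) = gaff e1 e3 e2 t1 t3 t2 (g y)" for e1 e2 e3 t1 t2 t3 y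
    by (simp add: g_def gaff_def)
  have rel: "(g y, g y') \<in> orbit_rel KC \<longleftrightarrow> (y, y') \<in> orbit_rel C'.KC" for y y'
  proof
    assume "(g y, g y') \<in> orbit_rel KC"
    then obtain e1 e2 e3 m1 m2 m3 where c: "C e1 e2 e3 m1 m2 m3" and
      e: "g y' = gaff e1 e2 e3 (2 * of_int m1) (2 * of_int m2) (2 * of_int m3) (g y)"
      unfolding orbit_rel_KC by blast
    have "y' = gaff e1 e3 e2 (2 * of_int m1) (2 * of_int m3) (2 * of_int m2) y"
      using arg_cong[OF e, of g] by (simp add: gg gs)
    then show "(y, y') \<in> orbit_rel C'.KC" unfolding C'.orbit_rel_KC using c by blast
  next
    assume "(y, y') \<in> orbit_rel C'.KC"
    then obtain e1 e2 e3 m1 m2 m3 where c: "C e1 e3 e2 m1 m3 m2" and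
      e: "y' = gaff e1 e2 e3 (2 * of_int m1) (2 * of_int m2) (2 * of_int m3) y"
      unfolding C'.orbit_rel_KC by blast
    have "g y' = gaff e1 e3 e2 (2 * of_int m1) (2 * of_int m3) (2 * of_int m2) (g y)"
      using e by (simp add: gs)
    then show "(g y, g y') \<in> orbit_rel KC" unfolding orbit_rel_KC using c by blast
  qed
  show ?thesis by (rule orbit_space_homeo[OF cg cg gg gg rel])
qed

end




theorem proposition3p1:
  fixes lam :: "face \<Rightarrow> bit^'k"
  assumes "CARD('k) \<ge> 3"
    and "proper_colouring lam"
    and "orientable_colouring lam"
  shows "(row_space lam \<inter> T_set = T_set \<longrightarrow> (M_lam lam) homeomorphic_space torus3)
       \<and> ({} \<noteq> row_space lam \<inter> T_set \<and> row_space lam \<inter> T_set \<subset> T_set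
            \<longrightarrow> (M_lam lam) homeomorphic_space half_turn_manifold)
       \<and> (row_space lam \<inter> T_set = {} \<longrightarrow> (M_lam lam) homeomorphic_space hantzsche_wendt)"
proof -
  interpret cpred "Cl lam"
    apply unfold_locales
      apply (rule Cl_add; assumption)
     apply (rule Cl_par; assumption)
    apply (rule Cl_zero)
    done
  have M: "M_lam lam = orbit_space KC"
    unfolding M_lam_def kernel_eq KC_def ..
  have col: "colouring lam" using assms(2) unfolding proper_colouring_def by blast
  define t1 :: "bit^face" where "t1 = axis F1 1 + axis F2 1"
  define t2 :: "bit^face" where "t2 = axis F3 1 + axis F4 1"
  define t3 :: "bit^face" where "t3 = axis F5 1 + axis F6 1"
  have T: "T_set = {t1, t2, t3}" unfolding T_set_def t1_def t2_def t3_def ..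
  have rt1: "t1 \<in> row_space lam \<Longrightarrow> Cl lam e1 e2 e3 m1 m2 m3 \<Longrightarrow> \<not> e1" for e1 e2 e3 m1 m2 m3
    unfolding t1_def using row_t(1)[of lam e1 e2 e3 m1 m2 m3] by blast
  have rt2: "t2 \<in> row_space lam \<Longrightarrow> Cl lam e1 e2 e3 m1 m2 m3 \<Longrightarrow> \<not> e2" for e1 e2 e3 m1 m2 m3
    unfolding t2_def using row_t(2)[of lam e1 e2 e3 m1 m2 m3] by blast
  have rt3: "t3 \<in> row_space lam \<Longrightarrow> Cl lam e1 e2 e3 m1 m2 m3 \<Longrightarrow> \<not> e3" for e1 e2 e3 m1 m2 m3
    unfolding t3_def using row_t(3)[of lam e1 e2 e3 m1 m2 m3] by blast
  have rc1: "t1 \<notin> row_space lam \<Longrightarrow> \<exists>e1 e2 e3 m1 m2 m3. Cl lam e1 e2 e3 m1 m2 m3 \<and> e1"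
    unfolding t1_def using row_t_conv(1)[OF col] by blast
  have rc2: "t2 \<notin> row_space lam \<Longrightarrow> \<exists>e1 e2 e3 m1 m2 m3. Cl lam e1 e2 e3 m1 m2 m3 \<and> e2"
    unfolding t2_def using row_t_conv(2)[OF col] by blast
  have rc3: "t3 \<notin> row_space lam \<Longrightarrow> \<exists>e1 e2 e3 m1 m2 m3. Cl lam e1 e2 e3 m1 m2 m3 \<and> e3"
    unfolding t3_def using row_t_conv(3)[OF col] by blast
  have O: "Cl lam e1 e2 e3 m1 m2 m3 \<Longrightarrow> e3 = (e1 \<noteq> e2)" for e1 e2 e3 m1 m2 m3
    using orient_Cl[OF assms(3)] by blast
  note P = proper_Cl[OF assms(2)]
  have case1: "M_lam lam homeomorphic_space torus3"
    if "t1 \<in> row_space lam" "t2 \<in> row_space lam" "t3 \<in> row_space lam"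
    unfolding M by (rule torus_case) (use rt1 rt2 rt3 that in blast)
  have case3: "M_lam lam homeomorphic_space hantzsche_wendt"
    if h: "t1 \<notin> row_space lam" "t2 \<notin> row_space lam" "t3 \<notin> row_space lam"
  proof -
    obtain a1 a2 a3 i1 i2 i3 where A: "Cl lam a1 a2 a3 i1 i2 i3" "a1" using rc1[OF h(1)] by blast
    obtain b1 b2 b3 j1 j2 j3 where B: "Cl lam b1 b2 b3 j1 j2 j3" "b2" using rc2[OF h(2)] by blast
    obtain c1 c2 c3 k1 k2 k3 where Cc: "Cl lam c1 c2 c3 k1 k2 k3" "c3" using rc3[OF h(3)] by blast
    have oa: "a3 = (a1 \<noteq> a2)" using O[OF A(1)] .
    have ob: "b3 = (b1 \<noteq> b2)" using O[OF B(1)] .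
    have oc: "c3 = (c1 \<noteq> c2)" using O[OF Cc(1)] .
    have Ea: "\<exists>m1 m2 m3. Cl lam False True True m1 m2 m3"
    proof (cases b1)
      case False then show ?thesis using B ob by auto
    next
      case True
      then have B': "Cl lam True True False j1 j2 j3" using B ob by simp
      show ?thesis
      proof (cases c1)
        case False then show ?thesis using Cc oc by auto
      next
        case True
        then have C': "Cl lam True False True k1 k2 k3" using Cc oc by auto
        from Cadd[OF B' C'] show ?thesis by auto
      qed
    qed
    have Eb: "\<exists>m1 m2 m3. Cl lam True False True m1 m2 m3"
    proof (cases a2)
      case False then show ?thesis using A oa by auto
    next
      case True
      then have A': "Cl lam True True False i1 i2 i3" using A oa by simp
      show ?thesis
      proof (cases c1)
        case True then show ?thesis using Cc oc by auto
      next
        case False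
        then have C': "Cl lam False True True k1 k2 k3" using Cc oc by auto
        from Cadd[OF A' C'] show ?thesis by auto
      qed
    qed
    show ?thesis unfolding M
      by (rule hw_case[OF O P(1) P(2) P(3) Ea Eb])
  qed
  have case2: "M_lam lam homeomorphic_space half_turn_manifold"
    if h: "t1 \<in> row_space lam \<or> t2 \<in> row_space lam \<or> t3 \<in> row_space lam"
      "t1 \<notin> row_space lam \<or> t2 \<notin> row_space lam \<or> t3 \<notin> row_space lam"
  proof -
    have no12: False if a: "t1 \<in> row_space lam" "t2 \<in> row_space lam" "t3 \<notin> row_space lam"
    proof -
      obtain e1 e2 e3 m1 m2 m3 where "Cl lam e1 e2 e3 m1 m2 m3" "e3" using rc3[OF a(3)] by blast
      then show False using rt1[OF a(1)] rt2[OF a(2)] O by blast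
    qed
    have no13: False if a: "t1 \<in> row_space lam" "t3 \<in> row_space lam" "t2 \<notin> row_space lam"
    proof -
      obtain e1 e2 e3 m1 m2 m3 where "Cl lam e1 e2 e3 m1 m2 m3" "e2" using rc2[OF a(3)] by blast
      then show False using rt1[OF a(1)] rt3[OF a(2)] O by blast
    qed
    have no23: False if a: "t2 \<in> row_space lam" "t3 \<in> row_space lam" "t1 \<notin> row_space lam"
    proof -
      obtain e1 e2 e3 m1 m2 m3 where "Cl lam e1 e2 e3 m1 m2 m3" "e1" using rc1[OF a(3)] by blast
      then show False using rt2[OF a(1)] rt3[OF a(2)] O by blast
    qed
    consider "t3 \<in> row_space lam" "t1 \<notin> row_space lam" "t2 \<notin> row_space lam"
      | "t1 \<in> row_space lam" "t2 \<notin> row_space lam" "t3 \<notin> row_space lam"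
      | "t2 \<in> row_space lam" "t1 \<notin> row_space lam" "t3 \<notin> row_space lam"
      using h no12 no13 no23 by blast
    then show ?thesis
    proof cases
      case 1
      have A1: "\<not> e3 \<and> e1 = e2" if "Cl lam e1 e2 e3 m1 m2 m3" for e1 e2 e3 m1 m2 m3
        using rt3[OF 1(1) that] O[OF that] by blast
      have A2: "\<exists>m1 m2 m3. Cl lam True True False m1 m2 m3"
      proof -
        obtain e1 e2 e3 m1 m2 m3 where c: "Cl lam e1 e2 e3 m1 m2 m3" "e1" using rc1[OF 1(2)] by blast
        then show ?thesis using A1[OF c(1)] by auto
      qed
      show ?thesis unfolding M by (rule half_case[OF A1 A2 P(1)])
    next
      case 2
      interpret C13: cpred "\<lambda>e1 e2 e3 m1 m2 m3. Cl lam e3 e2 e1 m3 m2 m1" by (rule swap13_cpred)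
      have A1: "\<not> e3 \<and> e1 = e2" if "Cl lam e3 e2 e1 m3 m2 m1" for e1 e2 e3 m1 m2 m3
        using rt1[OF 2(1) that] O[OF that] by blast
      have A2: "\<exists>m1 m2 m3. Cl lam False True True m3 m2 m1"
      proof -
        obtain e1 e2 e3 m1 m2 m3 where c: "Cl lam e1 e2 e3 m1 m2 m3" "e2" using rc2[OF 2(2)] by blast
        then show ?thesis using rt1[OF 2(1) c(1)] O[OF c(1)] by auto
      qed
      have A3: "odd m3" if "Cl lam False True True m3 m2 m1" for m1 m2 m3
        using P(3)[OF that] .
      have "orbit_space C13.KC homeomorphic_space half_turn_manifold"
        by (rule C13.half_case[OF A1 A2 A3])
      then show ?thesis unfolding M using swap13_homeo homeomorphic_space_trans by blast
    next
      case 3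
      interpret C23: cpred "\<lambda>e1 e2 e3 m1 m2 m3. Cl lam e1 e3 e2 m1 m3 m2" by (rule swap23_cpred)
      have A1: "\<not> e3 \<and> e1 = e2" if "Cl lam e1 e3 e2 m1 m3 m2" for e1 e2 e3 m1 m2 m3
        using rt2[OF 3(1) that] O[OF that] by blast
      have A2: "\<exists>m1 m2 m3. Cl lam True False True m1 m3 m2"
      proof -
        obtain e1 e2 e3 m1 m2 m3 where c: "Cl lam e1 e2 e3 m1 m2 m3" "e1" using rc1[OF 3(2)] by blast
        then show ?thesis using rt2[OF 3(1) c(1)] O[OF c(1)] by auto
      qed
      have A3: "odd m3" if "Cl lam True False True m1 m3 m2" for m1 m2 m3
        using P(2)[OF that] .
      have "orbit_space C23.KC homeomorphic_space half_turn_manifold"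
        by (rule C23.half_case[OF A1 A2 A3])
      then show ?thesis unfolding M using swap23_homeo homeomorphic_space_trans by blast
    qed
  qed
  show ?thesis
  proof (intro conjI impI)
    assume "row_space lam \<inter> T_set = T_set"
    then show "M_lam lam homeomorphic_space torus3" unfolding T using case1 by blast
  next
    assume "{} \<noteq> row_space lam \<inter> T_set \<and> row_space lam \<inter> T_set \<subset> T_set"
    then have "t1 \<in> row_space lam \<or> t2 \<in> row_space lam \<or> t3 \<in> row_space lam"
      "t1 \<notin> row_space lam \<or> t2 \<notin> row_space lam \<or> t3 \<notin> row_space lam"
      unfolding T by blast+
    then show "M_lam lam homeomorphic_space half_turn_manifold" by (rule case2)
  next
    assume "row_space lam \<inter> T_set = {}"
    then show "M_lam lam homeomorphic_space hantzsche_wendt" unfolding T using case3 by blast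
  qed
qed



end
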